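(* Let $P$ be a continuous $L$-ordered set. Then (1) $({\rm pt}_L\sigma_L(P),{\rm sub}_{\sigma_L(P)})$ is a continuous $L$-dcpo; (2) the Scott $L$-topology of $({\rm pt}_L\sigma_L(P),{\rm sub}_{\sigma_L(P)})$ coincides with the spectral $L$-topology $\mathcal O{\rm pt}_L\sigma_L(P)$, i.e., $\sigma_L({\rm pt}_L\sigma_L(P))=\mathcal O{\rm pt}_L\sigma_L(P)$.
   Context: $L$ is a frame with implication $\to$. $L$-subsets: maps to $L$; ${\rm sub}_X(A,B)=\bigwedge_xA(x)\to B(x)$. $L$-order $e$ on $P$: $e(x,x)=1$, $e(x,y)\wedge e(y,z)\le e(x,z)$, $e(x,y)\wedge e(y,x)=1\Rightarrow x=y$. ${\downarrow}y(x)=e(x,y)$; $\sqcup A=x$ iff $e(x,y)={\rm sub}_P(A,{\downarrow}y)$ for all $y$; directed: $\bigvee D=1$ and $D(x)\wedge D(y)\le\bigvee_zD(z)\wedge e(x,z)\wedge e(y,z)$; ideal: directed lower set; $L$-dcpo: every directed $L$-subset has a supremum; ${\Downarrow}x(y)=\bigwedge\{e(x,\sqcup I)\to I(y):I\text{ ideal with a supremum}\}$; continuous $L$-ordered set: each ${\Downarrow}x$ directed with supremum $x$; continuous $L$-dcpo: continuous $L$-ordered set that is an $L$-dcpo. Scott $L$-topology $\sigma_L(P)$: upper sets $A$ ($A(x)\wedge e(x,y)\le A(y)$) with $A(\sqcup D)=\bigvee_xA(x)\wedge D(x)$ for every directed $D$ having a supremum. ${\rm pt}_L\sigma_L(P)$: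 the set of maps $p:\sigma_L(P)\to L$ preserving binary meets and arbitrary joins with $p(\lambda_P)=\lambda$ for constants; $L$-ordered by ${\rm sub}_{\sigma_L(P)}(p,q)=\bigwedge_{A\in\sigma_L(P)}p(A)\to q(A)$; its spectral $L$-topology $\mathcal O{\rm pt}_L\sigma_L(P)=\{\phi(A):A\in\sigma_L(P)\}$ with $\phi(A)(p)=p(A)$. *)

theory Defs
  imports Main
begin

definition frame :: "'l::complete_lattice itself \<Rightarrow> bool" where
  "frame _ \<longleftrightarrow> (\<forall>(a::'l) S. inf a (Sup S) = Sup ((inf a) ` S))"

definition limp :: "'l::complete_lattice \<Rightarrow> 'l \<Rightarrow> 'l" where
  "limp a b = Sup {c. inf c a \<le> b}"

text \<open>L-subsets of a carrier X: maps X \<rightarrow> L, represented as total functions that are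
bottom outside X (canonical representatives).\<close>

definition Lsubset :: "'a set \<Rightarrow> ('a \<Rightarrow> 'l::complete_lattice) \<Rightarrow> bool" where
  "Lsubset X A \<longleftrightarrow> (\<forall>x. x \<notin> X \<longrightarrow> A x = bot)"

definition Lsub :: "'a set \<Rightarrow> ('a \<Rightarrow> 'l::complete_lattice) \<Rightarrow> ('a \<Rightarrow> 'l) \<Rightarrow> 'l" where
  "Lsub X A B = (INF x\<in>X. limp (A x) (B x))"

definition Lorder :: "'a set \<Rightarrow> ('a \<Rightarrow> 'a \<Rightarrow> 'l::complete_lattice) \<Rightarrow> bool" where
  "Lorder X e \<longleftrightarrow>
     (\<forall>x\<in>X. e x x = top) \<and>
     (\<forall>x\<in>X. \<forall>y\<in>X. \<forall>z\<in>X. inf (e x y) (e y z) \<le> e x z) \<and>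
     (\<forall>x\<in>X. \<forall>y\<in>X. inf (e x y) (e y x) = top \<longrightarrow> x = y)"

definition ldown :: "'a set \<Rightarrow> ('a \<Rightarrow> 'a \<Rightarrow> 'l::complete_lattice) \<Rightarrow> 'a \<Rightarrow> 'a \<Rightarrow> 'l" where
  "ldown X e y = (\<lambda>x. if x \<in> X then e x y else bot)"

definition is_Lsup :: "'a set \<Rightarrow> ('a \<Rightarrow> 'a \<Rightarrow> 'l::complete_lattice) \<Rightarrow> ('a \<Rightarrow> 'l) \<Rightarrow> 'a \<Rightarrow> bool" where
  "is_Lsup X e A s \<longleftrightarrow> s \<in> X \<and> (\<forall>y\<in>X. e s y = Lsub X A (ldown X e y))"

definition Ldirected :: "'a set \<Rightarrow> ('a \<Rightarrow> 'a \<Rightarrow> 'l::complete_lattice) \<Rightarrow> ('a \<Rightarrow> 'l) \<Rightarrow> bool" where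
  "Ldirected X e D \<longleftrightarrow>
     (SUP x\<in>X. D x) = top \<and>
     (\<forall>x\<in>X. \<forall>y\<in>X. inf (D x) (D y) \<le> (SUP z\<in>X. inf (D z) (inf (e x z) (e y z))))"

definition Llower :: "'a set \<Rightarrow> ('a \<Rightarrow> 'a \<Rightarrow> 'l::complete_lattice) \<Rightarrow> ('a \<Rightarrow> 'l) \<Rightarrow> bool" where
  "Llower X e A \<longleftrightarrow> (\<forall>x\<in>X. \<forall>y\<in>X. inf (A x) (e y x) \<le> A y)"

definition Lupper :: "'a set \<Rightarrow> ('a \<Rightarrow> 'a \<Rightarrow> 'l::complete_lattice) \<Rightarrow> ('a \<Rightarrow> 'l) \<Rightarrow> bool" where
  "Lupper X e A \<longleftrightarrow> (\<forall>x\<in>X. \<forall>y\<in>X. inf (A x) (e x y) \<le> A y)"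

definition Lideal :: "'a set \<Rightarrow> ('a \<Rightarrow> 'a \<Rightarrow> 'l::complete_lattice) \<Rightarrow> ('a \<Rightarrow> 'l) \<Rightarrow> bool" where
  "Lideal X e I \<longleftrightarrow> Lsubset X I \<and> Ldirected X e I \<and> Llower X e I"

definition Ldcpo :: "'a set \<Rightarrow> ('a \<Rightarrow> 'a \<Rightarrow> 'l::complete_lattice) \<Rightarrow> bool" where
  "Ldcpo X e \<longleftrightarrow> Lorder X e \<and>
     (\<forall>D. Lsubset X D \<and> Ldirected X e D \<longrightarrow> (\<exists>s. is_Lsup X e D s))"

definition wayb :: "'a set \<Rightarrow> ('a \<Rightarrow> 'a \<Rightarrow> 'l::complete_lattice) \<Rightarrow> 'a \<Rightarrow> 'a \<Rightarrow> 'l" where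
  "wayb X e x = (\<lambda>y. if y \<in> X then
      Inf {limp (e x s) (I y) | I s. Lideal X e I \<and> is_Lsup X e I s} else bot)"

definition cont_Lordered :: "'a set \<Rightarrow> ('a \<Rightarrow> 'a \<Rightarrow> 'l::complete_lattice) \<Rightarrow> bool" where
  "cont_Lordered X e \<longleftrightarrow> Lorder X e \<and>
     (\<forall>x\<in>X. Ldirected X e (wayb X e x) \<and> is_Lsup X e (wayb X e x) x)"

definition cont_Ldcpo :: "'a set \<Rightarrow> ('a \<Rightarrow> 'a \<Rightarrow> 'l::complete_lattice) \<Rightarrow> bool" where
  "cont_Ldcpo X e \<longleftrightarrow> cont_Lordered X e \<and> Ldcpo X e"

definition scott :: "'a set \<Rightarrow> ('a \<Rightarrow> 'a \<Rightarrow> 'l::complete_lattice) \<Rightarrow> ('a \<Rightarrow> 'l) set" where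
  "scott X e = {A. Lsubset X A \<and> Lupper X e A \<and>
     (\<forall>D s. Lsubset X D \<and> Ldirected X e D \<and> is_Lsup X e D s \<longrightarrow>
        A s = (SUP x\<in>X. inf (A x) (D x)))}"

definition lconst :: "'a set \<Rightarrow> 'l::complete_lattice \<Rightarrow> 'a \<Rightarrow> 'l" where
  "lconst X c = (\<lambda>x. if x \<in> X then c else bot)"

text \<open>Points of \<sigma>_L(P): maps \<sigma>_L(P) \<rightarrow> L (bottom outside \<sigma>_L(P)) preserving binary
meets, arbitrary joins and constants.\<close>
definition pts :: "'a set \<Rightarrow> ('a \<Rightarrow> 'a \<Rightarrow> 'l::complete_lattice) \<Rightarrow> (('a \<Rightarrow> 'l) \<Rightarrow> 'l) set" where
  "pts X e = {p. (\<forall>A. A \<notin> scott X e \<longrightarrow> p A = bot) \<and>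
     (\<forall>A\<in>scott X e. \<forall>B\<in>scott X e. p (inf A B) = inf (p A) (p B)) \<and>
     (\<forall>\<A>. \<A> \<subseteq> scott X e \<longrightarrow> p (Sup \<A>) = (SUP A\<in>\<A>. p A)) \<and>
     (\<forall>c. p (lconst X c) = c)}"

definition pt_order :: "'a set \<Rightarrow> ('a \<Rightarrow> 'a \<Rightarrow> 'l::complete_lattice) \<Rightarrow>
    (('a \<Rightarrow> 'l) \<Rightarrow> 'l) \<Rightarrow> (('a \<Rightarrow> 'l) \<Rightarrow> 'l) \<Rightarrow> 'l" where
  "pt_order X e p q = Lsub (scott X e) p q"

definition phi :: "'a set \<Rightarrow> ('a \<Rightarrow> 'a \<Rightarrow> 'l::complete_lattice) \<Rightarrow> ('a \<Rightarrow> 'l) \<Rightarrow>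
    (('a \<Rightarrow> 'l) \<Rightarrow> 'l) \<Rightarrow> 'l" where
  "phi X e A = (\<lambda>p. if p \<in> pts X e then p A else bot)"

definition spectral :: "'a set \<Rightarrow> ('a \<Rightarrow> 'a \<Rightarrow> 'l::complete_lattice) \<Rightarrow>
    ((('a \<Rightarrow> 'l) \<Rightarrow> 'l) \<Rightarrow> 'l) set" where
  "spectral X e = phi X e ` scott X e"

end

theory Submission
  imports Defs
begin

section \<open>Frame lemmas\<close>

lemma frameD: "frame TYPE('l::complete_lattice) \<Longrightarrow> inf (a::'l) (Sup S) = Sup (inf a ` S)"
  unfolding frame_def by simp

lemma inf_SUP_fr:
  assumes "frame TYPE('l::complete_lattice)"
  shows "inf (a::'l) (SUP i\<in>I. f i) = (SUP i\<in>I. inf a (f i))"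
  using frameD[OF assms, of a "f ` I"] by (simp add: image_image)

lemma SUP_inf_fr:
  assumes "frame TYPE('l::complete_lattice)"
  shows "inf (SUP i\<in>I. f i) (a::'l) = (SUP i\<in>I. inf (f i) a)"
  using inf_SUP_fr[OF assms, of a f I] by (simp add: inf_commute)

lemma inf_SUP_le:
  assumes "frame TYPE('l::complete_lattice)"
    and "\<And>i. i \<in> I \<Longrightarrow> inf (a::'l) (f i) \<le> c"
  shows "inf a (SUP i\<in>I. f i) \<le> c"
  unfolding inf_SUP_fr[OF assms(1)] using assms(2) by (simp add: SUP_least)

lemma SUP_inf_le:
  assumes "frame TYPE('l::complete_lattice)"
    and "\<And>i. i \<in> I \<Longrightarrow> inf (f i) (a::'l) \<le> c"
  shows "inf (SUP i\<in>I. f i) a \<le> c"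
  unfolding SUP_inf_fr[OF assms(1)] using assms(2) by (simp add: SUP_least)

lemma inf_SUP2_le:
  assumes F: "frame TYPE('l::complete_lattice)"
    and "\<And>i j. i \<in> I \<Longrightarrow> j \<in> J \<Longrightarrow> inf (f i) (g j) \<le> (c::'l)"
  shows "inf (SUP i\<in>I. f i) (SUP j\<in>J. g j) \<le> c"
  apply (rule SUP_inf_le[OF F])
  apply (rule inf_SUP_le[OF F])
  apply (rule assms(2))
  by assumption+

lemma limp_adj:
  assumes F: "frame TYPE('l::complete_lattice)"
  shows "((c::'l) \<le> limp a b) \<longleftrightarrow> inf c a \<le> b"
proof
  assume "c \<le> limp a b"
  then have "inf c a \<le> inf a (limp a b)" by (meson inf_le2 le_infI le_infI1)
  also have "\<dots> = Sup (inf a ` {c. inf c a \<le> b})" unfolding limp_def by (rule frameD[OF F])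
  also have "\<dots> \<le> b" by (rule Sup_least) (auto simp: inf_commute)
  finally show "inf c a \<le> b" .
next
  assume "inf c a \<le> b" then show "c \<le> limp a b" by (simp add: limp_def Sup_upper)
qed

lemma limp_mp:
  assumes F: "frame TYPE('l::complete_lattice)"
  shows "inf (limp a b) (a::'l) \<le> b"
  using limp_adj[OF F] by blast

lemma limp_mp2:
  assumes F: "frame TYPE('l::complete_lattice)"
  shows "inf (a::'l) (limp a b) \<le> b"
  using limp_mp[OF F] by (simp add: inf_commute)

lemma limp_top_left:
  assumes F: "frame TYPE('l::complete_lattice)"
  shows "limp top (b::'l) = b"
proof (rule antisym)
  show "limp top b \<le> b" using limp_mp[OF F, of top b] by simp
  show "b \<le> limp top b" using limp_adj[OF F, of b top b] by simp
qed

lemma limp_self: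
  assumes F: "frame TYPE('l::complete_lattice)"
  shows "limp (a::'l) a = top"
  using limp_adj[OF F, of top a a] by (simp add: top_unique)

lemma limp_top_iff:
  assumes F: "frame TYPE('l::complete_lattice)"
  shows "limp (a::'l) b = top \<longleftrightarrow> a \<le> b"
  using limp_adj[OF F, of top a b] by (simp add: top_unique)

section \<open>Generic L-ordered set lemmas\<close>

lemma Lsub_ge:
  assumes F: "frame TYPE('l::complete_lattice)"
  shows "((c::'l) \<le> Lsub X A B) \<longleftrightarrow> (\<forall>x\<in>X. inf c (A x) \<le> B x)"
  unfolding Lsub_def by (simp add: le_INF_iff limp_adj[OF F])

lemma Lsub_app:
  assumes F: "frame TYPE('l::complete_lattice)" and "x \<in> X"
  shows "inf (Lsub X A B) (A x) \<le> (B x::'l)"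
  using Lsub_ge[OF F, of "Lsub X A B" X A B] assms(2) by blast

lemma Lsub_anti:
  assumes F: "frame TYPE('l::complete_lattice)" and "\<And>x. x \<in> X \<Longrightarrow> A x \<le> A' x"
  shows "Lsub X A' B \<le> (Lsub X A B::'l)"
  unfolding Lsub_ge[OF F]
proof
  fix x assume x: "x \<in> X"
  have "inf (Lsub X A' B) (A x) \<le> inf (Lsub X A' B) (A' x)" using assms(2)[OF x] by (simp add: le_infI2)
  also have "\<dots> \<le> B x" by (rule Lsub_app[OF F x])
  finally show "inf (Lsub X A' B) (A x) \<le> B x" .
qed

lemma isLsup_in: "is_Lsup X E D s \<Longrightarrow> s \<in> X"
  unfolding is_Lsup_def by blast

lemma isLsup_eq: "is_Lsup X E D s \<Longrightarrow> y \<in> X \<Longrightarrow> E s y = Lsub X D (ldown X E y)"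
  by (simp add: is_Lsup_def)

lemma isLsup_le:
  assumes F: "frame TYPE('l::complete_lattice)"
    and S: "is_Lsup X E D s" and x: "x \<in> X" and y: "y \<in> X"
  shows "inf (E s y) (D x) \<le> (E x y::'l)"
proof -
  have "inf (Lsub X D (ldown X E y)) (D x) \<le> ldown X E y x" by (rule Lsub_app[OF F x])
  then show ?thesis using x isLsup_eq[OF S y] by (simp add: ldown_def)
qed

lemma isLsup_upper:
  assumes F: "frame TYPE('l::complete_lattice)" and O: "Lorder X E"
    and S: "is_Lsup X E D s" and x: "x \<in> X"
  shows "D x \<le> (E x s::'l)"
proof -
  have s: "s \<in> X" using S by (rule isLsup_in)
  have "E s s = top" using O s by (simp add: Lorder_def)
  then show ?thesis using isLsup_le[OF F S x s] by simp
qed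

lemma isLsup_least:
  assumes F: "frame TYPE('l::complete_lattice)"
    and S: "is_Lsup X E D s" and y: "y \<in> X"
    and H: "\<And>x. x \<in> X \<Longrightarrow> inf c (D x) \<le> (E x y::'l)"
  shows "c \<le> E s y"
proof -
  have "c \<le> Lsub X D (ldown X E y)" unfolding Lsub_ge[OF F] using H by (simp add: ldown_def)
  then show ?thesis using isLsup_eq[OF S y] by simp
qed

lemma isLsup_intro:
  assumes F: "frame TYPE('l::complete_lattice)"
    and s: "s \<in> X"
    and H1: "\<And>x y. x \<in> X \<Longrightarrow> y \<in> X \<Longrightarrow> inf (E s y) (D x) \<le> (E x y::'l)"
    and H2: "\<And>y. y \<in> X \<Longrightarrow> Lsub X D (ldown X E y) \<le> E s y"
  shows "is_Lsup X E D s"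
  unfolding is_Lsup_def
proof (intro conjI s ballI antisym)
  fix y assume y: "y \<in> X"
  show "E s y \<le> Lsub X D (ldown X E y)" using H1 y by (simp add: Lsub_ge[OF F] ldown_def)
  show "Lsub X D (ldown X E y) \<le> E s y" using H2 y .
qed

lemma isLsup_unique:
  assumes F: "frame TYPE('l::complete_lattice)" and O: "Lorder X (E::'a \<Rightarrow> 'a \<Rightarrow> 'l)"
    and S: "is_Lsup X E D s" and T: "is_Lsup X E D t"
  shows "s = t"
proof -
  have s: "s \<in> X" and t: "t \<in> X" using S T by (auto simp: is_Lsup_def)
  have "top \<le> E s t" by (rule isLsup_least[OF F S t]) (simp add: isLsup_upper[OF F O T])
  moreover have "top \<le> E t s" by (rule isLsup_least[OF F T s]) (simp add: isLsup_upper[OF F O S])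
  ultimately have eq: "inf (E s t) (E t s) = top" by (simp add: top_unique)
  have H: "\<forall>x\<in>X. \<forall>y\<in>X. inf (E x y) (E y x) = top \<longrightarrow> x = y"
    using O unfolding Lorder_def by (elim conjE)
  have "inf (E s t) (E t s) = top \<longrightarrow> s = t" using bspec[OF bspec[OF H s] t] .
  then show ?thesis using eq by (rule mp)
qed

lemma Lorder_refl: "Lorder X E \<Longrightarrow> x \<in> X \<Longrightarrow> E x x = top"
  by (simp add: Lorder_def)

lemma Lorder_trans: "Lorder X E \<Longrightarrow> x \<in> X \<Longrightarrow> y \<in> X \<Longrightarrow> z \<in> X \<Longrightarrow> inf (E x y) (E y z) \<le> E x z"
  by (simp add: Lorder_def)

lemma Ldirected_top: "Ldirected X E D \<Longrightarrow> (SUP x\<in>X. D x) = top"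
  by (simp add: Ldirected_def)

lemma Ldirected_pair: "Ldirected X E D \<Longrightarrow> x \<in> X \<Longrightarrow> y \<in> X \<Longrightarrow>
   inf (D x) (D y) \<le> (SUP z\<in>X. inf (D z) (inf (E x z) (E y z)))"
  by (simp add: Ldirected_def)


lemma le_infI3: "(x::'l::lattice) \<le> a \<Longrightarrow> x \<le> b \<Longrightarrow> x \<le> c \<Longrightarrow> x \<le> inf a (inf b c)"
  by simp

lemma ldown_ideal:
  assumes F: "frame TYPE('l::complete_lattice)" and O: "Lorder X (E::'a \<Rightarrow> 'a \<Rightarrow> 'l)"
    and x: "x \<in> X"
  shows "Lideal X E (ldown X E x) \<and> is_Lsup X E (ldown X E x) x"
proof -
  have xx: "E x x = top" using O x by (rule Lorder_refl)
  have dir: "Ldirected X E (ldown X E x)"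
    unfolding Ldirected_def
  proof (intro conjI ballI)
    have "top \<le> ldown X E x x" using x xx by (simp add: ldown_def)
    also have "\<dots> \<le> (SUP y\<in>X. ldown X E x y)" using x by (rule SUP_upper)
    finally show "(SUP y\<in>X. ldown X E x y) = top" by (simp add: top_unique)
  next
    fix y1 y2 assume y1: "y1 \<in> X" and y2: "y2 \<in> X"
    have "inf (ldown X E x y1) (ldown X E x y2) = inf (ldown X E x x) (inf (E y1 x) (E y2 x))"
      using x y1 y2 xx by (simp add: ldown_def)
    also have "\<dots> \<le> (SUP z\<in>X. inf (ldown X E x z) (inf (E y1 z) (E y2 z)))"
      using x by (rule SUP_upper)
    finally show "inf (ldown X E x y1) (ldown X E x y2) \<le> (SUP z\<in>X. inf (ldown X E x z) (inf (E y1 z) (E y2 z)))" .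
  qed
  have low: "Llower X E (ldown X E x)"
    unfolding Llower_def
  proof (intro ballI)
    fix y z assume y: "y \<in> X" and z: "z \<in> X"
    have "inf (E z y) (E y x) \<le> E z x" using Lorder_trans[OF O z y x] .
    then show "inf (ldown X E x y) (E z y) \<le> ldown X E x z" using y z by (simp add: ldown_def inf_commute)
  qed
  have sub: "Lsubset X (ldown X E x)" by (simp add: Lsubset_def ldown_def)
  have sup: "is_Lsup X E (ldown X E x) x"
  proof (rule isLsup_intro[OF F x])
    fix z y assume z: "z \<in> X" and y: "y \<in> X"
    have "inf (E z x) (E x y) \<le> E z y" using Lorder_trans[OF O z x y] .
    then show "inf (E x y) (ldown X E x z) \<le> E z y" using z by (simp add: ldown_def inf_commute)
  next
    fix y assume y: "y \<in> X"
    have "inf (Lsub X (ldown X E x) (ldown X E y)) (ldown X E x x) \<le> ldown X E y x"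
      by (rule Lsub_app[OF F x])
    then show "Lsub X (ldown X E x) (ldown X E y) \<le> E x y" using x xx by (simp add: ldown_def)
  qed
  show ?thesis using dir low sub sup by (simp add: Lideal_def)
qed

lemma wayb_eq: "y \<in> X \<Longrightarrow> wayb X E x y = Inf {limp (E x s) (I y) | I s. Lideal X E I \<and> is_Lsup X E I s}"
  by (simp add: wayb_def)

lemma wayb_Lsubset: "Lsubset X (wayb X E x)"
  by (simp add: Lsubset_def wayb_def)

lemma wayb_le_ideal:
  assumes F: "frame TYPE('l::complete_lattice)"
    and I: "Lideal X E I" and S: "is_Lsup X E I s" and y: "y \<in> X"
  shows "inf (wayb X E x y) (E x s) \<le> (I y::'l)"
proof -
  have "limp (E x s) (I y) \<in> {limp (E x s) (I y) | I s. Lideal X E I \<and> is_Lsup X E I s}"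
    using I S by blast
  then have "wayb X E x y \<le> limp (E x s) (I y)" unfolding wayb_eq[OF y] by (rule Inf_lower)
  then show ?thesis using limp_adj[OF F] by blast
qed

lemma wayb_ge:
  assumes F: "frame TYPE('l::complete_lattice)" and y: "y \<in> X"
    and H: "\<And>I s. Lideal X E I \<Longrightarrow> is_Lsup X E I s \<Longrightarrow> inf c (E x s) \<le> (I y::'l)"
  shows "c \<le> wayb X E x y"
  unfolding wayb_eq[OF y]
proof (rule Inf_greatest)
  fix u assume "u \<in> {limp (E x s) (I y) | I s. Lideal X E I \<and> is_Lsup X E I s}"
  then obtain I s where u: "u = limp (E x s) (I y)" and I: "Lideal X E I" and S: "is_Lsup X E I s"
    by blast
  show "c \<le> u" unfolding u limp_adj[OF F] by (rule H[OF I S])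
qed

lemma wayb_le_E:
  assumes F: "frame TYPE('l::complete_lattice)" and O: "Lorder X (E::'a \<Rightarrow> 'a \<Rightarrow> 'l)"
    and x: "x \<in> X" and y: "y \<in> X"
  shows "wayb X E x y \<le> E y x"
proof -
  have "Lideal X E (ldown X E x)" and S: "is_Lsup X E (ldown X E x) x"
    using ldown_ideal[OF F O x] by auto
  then have "inf (wayb X E x y) (E x x) \<le> ldown X E x y" by (rule wayb_le_ideal[OF F _ _ y])
  then show ?thesis using x y Lorder_refl[OF O x] by (simp add: ldown_def)
qed

lemma wayb_lower:
  assumes F: "frame TYPE('l::complete_lattice)"
    and x: "x \<in> X" and y: "y \<in> X" and w: "w \<in> X"
  shows "inf (wayb X E x y) (E w y) \<le> (wayb X E x w::'l)"
proof (rule wayb_ge[OF F w])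
  fix I s assume I: "Lideal X E I" and S: "is_Lsup X E I s"
  have "inf (inf (wayb X E x y) (E w y)) (E x s) = inf (inf (wayb X E x y) (E x s)) (E w y)"
    by (simp add: ac_simps)
  also have "\<dots> \<le> inf (I y) (E w y)" using wayb_le_ideal[OF F I S y] by (rule inf_mono) simp
  also have "\<dots> \<le> I w" using I y w by (simp add: Lideal_def Llower_def)
  finally show "inf (inf (wayb X E x y) (E w y)) (E x s) \<le> I w" .
qed

lemma wayb_mono:
  assumes F: "frame TYPE('l::complete_lattice)" and O: "Lorder X (E::'a \<Rightarrow> 'a \<Rightarrow> 'l)"
    and x: "x \<in> X" and y: "y \<in> X" and z: "z \<in> X"
  shows "inf (wayb X E x y) (E x z) \<le> wayb X E z y"
proof (rule wayb_ge[OF F y])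
  fix I s assume I: "Lideal X E I" and S: "is_Lsup X E I s"
  have s: "s \<in> X" using S by (rule isLsup_in)
  have "inf (inf (wayb X E x y) (E x z)) (E z s) = inf (wayb X E x y) (inf (E x z) (E z s))"
    by (simp add: ac_simps)
  also have "\<dots> \<le> inf (wayb X E x y) (E x s)" using Lorder_trans[OF O x z s] by (rule inf_mono[OF order_refl])
  also have "\<dots> \<le> I y" by (rule wayb_le_ideal[OF F I S y])
  finally show "inf (inf (wayb X E x y) (E x z)) (E z s) \<le> I y" .
qed

definition lcl :: "'a set \<Rightarrow> ('a \<Rightarrow> 'a \<Rightarrow> 'l::complete_lattice) \<Rightarrow> ('a \<Rightarrow> 'l) \<Rightarrow> 'a \<Rightarrow> 'l" where
  "lcl X E D = (\<lambda>y. if y \<in> X then (SUP x\<in>X. inf (D x) (E y x)) else bot)"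

lemma lcl_ge:
  assumes O: "Lorder X E" and x: "x \<in> X"
  shows "D x \<le> lcl X E D x"
proof -
  have "D x = inf (D x) (E x x)" using Lorder_refl[OF O x] by simp
  also have "\<dots> \<le> (SUP y\<in>X. inf (D y) (E x y))" using x by (rule SUP_upper)
  finally show ?thesis using x by (simp add: lcl_def)
qed

lemma lcl_pair:
  assumes F: "frame TYPE('l::complete_lattice)" and O: "Lorder X (E::'a \<Rightarrow> 'a \<Rightarrow> 'l)"
    and Dd: "Ldirected X E D" and q1: "q1 \<in> X" and q2: "q2 \<in> X"
  shows "inf (lcl X E D q1) (lcl X E D q2) \<le> (SUP z\<in>X. inf (D z) (inf (E q1 z) (E q2 z)))"
proof -
  have "inf (SUP x\<in>X. inf (D x) (E q1 x)) (SUP x\<in>X. inf (D x) (E q2 x)) \<le> (SUP z\<in>X. inf (D z) (inf (E q1 z) (E q2 z)))"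
  proof (rule inf_SUP2_le[OF F])
    fix x1 x2 assume x1: "x1 \<in> X" and x2: "x2 \<in> X"
    have "inf (inf (D x1) (E q1 x1)) (inf (D x2) (E q2 x2)) = inf (inf (D x1) (D x2)) (inf (E q1 x1) (E q2 x2))"
      by (simp add: ac_simps)
    also have "\<dots> \<le> inf (SUP z\<in>X. inf (D z) (inf (E x1 z) (E x2 z))) (inf (E q1 x1) (E q2 x2))"
      using Ldirected_pair[OF Dd x1 x2] by (rule inf_mono) simp
    also have "\<dots> \<le> (SUP z\<in>X. inf (D z) (inf (E q1 z) (E q2 z)))"
    proof (rule SUP_inf_le[OF F])
      fix z assume z: "z \<in> X"
      have t1: "inf (E q1 x1) (E x1 z) \<le> E q1 z" by (rule Lorder_trans[OF O q1 x1 z])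
      have t2: "inf (E q2 x2) (E x2 z) \<le> E q2 z" by (rule Lorder_trans[OF O q2 x2 z])
      have "inf (inf (D z) (inf (E x1 z) (E x2 z))) (inf (E q1 x1) (E q2 x2))
            = inf (D z) (inf (inf (E q1 x1) (E x1 z)) (inf (E q2 x2) (E x2 z)))"
        by (simp add: ac_simps)
      also have "\<dots> \<le> inf (D z) (inf (E q1 z) (E q2 z))"
        using t1 t2 by (intro inf_mono order_refl)
      also have "\<dots> \<le> (SUP z\<in>X. inf (D z) (inf (E q1 z) (E q2 z)))" using z by (rule SUP_upper)
      finally show "inf (inf (D z) (inf (E x1 z) (E x2 z))) (inf (E q1 x1) (E q2 x2)) \<le> (SUP z\<in>X. inf (D z) (inf (E q1 z) (E q2 z)))" .
    qed
    finally show "inf (inf (D x1) (E q1 x1)) (inf (D x2) (E q2 x2)) \<le> (SUP z\<in>X. inf (D z) (inf (E q1 z) (E q2 z)))" .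
  qed
  then show ?thesis using q1 q2 by (simp add: lcl_def)
qed

lemma lcl_ideal:
  assumes F: "frame TYPE('l::complete_lattice)" and O: "Lorder X (E::'a \<Rightarrow> 'a \<Rightarrow> 'l)"
    and Dd: "Ldirected X E D" and S: "is_Lsup X E D s"
  shows "Lideal X E (lcl X E D) \<and> is_Lsup X E (lcl X E D) s"
proof -
  have s: "s \<in> X" using S by (rule isLsup_in)
  have sub: "Lsubset X (lcl X E D)" by (simp add: Lsubset_def lcl_def)
  have dir: "Ldirected X E (lcl X E D)"
    unfolding Ldirected_def
  proof (intro conjI ballI)
    have "top = (SUP x\<in>X. D x)" using Ldirected_top[OF Dd] by simp
    also have "\<dots> \<le> (SUP x\<in>X. lcl X E D x)" by (rule SUP_mono) (use lcl_ge[OF O] in blast)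
    finally show "(SUP x\<in>X. lcl X E D x) = top" by (simp add: top_unique)
  next
    fix q1 q2 assume q1: "q1 \<in> X" and q2: "q2 \<in> X"
    have "inf (lcl X E D q1) (lcl X E D q2) \<le> (SUP z\<in>X. inf (D z) (inf (E q1 z) (E q2 z)))"
      by (rule lcl_pair[OF F O Dd q1 q2])
    also have "\<dots> \<le> (SUP z\<in>X. inf (lcl X E D z) (inf (E q1 z) (E q2 z)))"
      by (rule SUP_mono) (use lcl_ge[OF O] in \<open>blast intro: inf_mono\<close>)
    finally show "inf (lcl X E D q1) (lcl X E D q2) \<le> (SUP z\<in>X. inf (lcl X E D z) (inf (E q1 z) (E q2 z)))" .
  qed
  have low: "Llower X E (lcl X E D)"
    unfolding Llower_def
  proof (intro ballI)
    fix x y assume x: "x \<in> X" and y: "y \<in> X"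
    have "inf (SUP w\<in>X. inf (D w) (E x w)) (E y x) \<le> (SUP w\<in>X. inf (D w) (E y w))"
    proof (rule SUP_inf_le[OF F])
      fix w assume w: "w \<in> X"
      have "inf (inf (D w) (E x w)) (E y x) = inf (D w) (inf (E y x) (E x w))" by (simp add: ac_simps)
      also have "\<dots> \<le> inf (D w) (E y w)" using Lorder_trans[OF O y x w] by (rule inf_mono[OF order_refl])
      also have "\<dots> \<le> (SUP w\<in>X. inf (D w) (E y w))" using w by (rule SUP_upper)
      finally show "inf (inf (D w) (E x w)) (E y x) \<le> (SUP w\<in>X. inf (D w) (E y w))" .
    qed
    then show "inf (lcl X E D x) (E y x) \<le> lcl X E D y" using x y by (simp add: lcl_def)
  qed
  have sup: "is_Lsup X E (lcl X E D) s"
  proof (rule isLsup_intro[OF F s])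
    fix x y assume x: "x \<in> X" and y: "y \<in> X"
    have "inf (E s y) (SUP w\<in>X. inf (D w) (E x w)) \<le> E x y"
    proof (rule inf_SUP_le[OF F])
      fix w assume w: "w \<in> X"
      have "inf (E s y) (inf (D w) (E x w)) \<le> inf (E s y) (inf (E w s) (E x w))"
        using isLsup_upper[OF F O S w] by (intro inf_mono order_refl)
      also have "\<dots> = inf (inf (E x w) (E w s)) (E s y)" by (simp add: ac_simps)
      also have "\<dots> \<le> inf (E x s) (E s y)" using Lorder_trans[OF O x w s] by (rule inf_mono) simp
      also have "\<dots> \<le> E x y" by (rule Lorder_trans[OF O x s y])
      finally show "inf (E s y) (inf (D w) (E x w)) \<le> E x y" .
    qed
    then show "inf (E s y) (lcl X E D x) \<le> E x y" using x by (simp add: lcl_def)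
  next
    fix y assume y: "y \<in> X"
    have "Lsub X (lcl X E D) (ldown X E y) \<le> Lsub X D (ldown X E y)"
      by (rule Lsub_anti[OF F]) (rule lcl_ge[OF O])
    also have "\<dots> = E s y" using isLsup_eq[OF S y] by simp
    finally show "Lsub X (lcl X E D) (ldown X E y) \<le> E s y" .
  qed
  show ?thesis using sub dir low sup by (simp add: Lideal_def)
qed

lemma cont_from_approx:
  assumes F: "frame TYPE('l::complete_lattice)" and O: "Lorder X (E::'a \<Rightarrow> 'a \<Rightarrow> 'l)"
    and x: "x \<in> X" and Kd: "Ldirected X E K" and KS: "is_Lsup X E K x"
    and Kw: "\<And>q. q \<in> X \<Longrightarrow> K q \<le> wayb X E x q"
  shows "Ldirected X E (wayb X E x) \<and> is_Lsup X E (wayb X E x) x"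
proof -
  have LI: "Lideal X E (lcl X E K)" and LS: "is_Lsup X E (lcl X E K) x"
    using lcl_ideal[OF F O Kd KS] by auto
  have wl: "wayb X E x q \<le> lcl X E K q" if q: "q \<in> X" for q
    using wayb_le_ideal[OF F LI LS q, of x] Lorder_refl[OF O x] by simp
  have dir: "Ldirected X E (wayb X E x)"
    unfolding Ldirected_def
  proof (intro conjI ballI)
    have "top = (SUP q\<in>X. K q)" using Ldirected_top[OF Kd] by simp
    also have "\<dots> \<le> (SUP q\<in>X. wayb X E x q)" by (rule SUP_mono) (use Kw in blast)
    finally show "(SUP q\<in>X. wayb X E x q) = top" by (simp add: top_unique)
  next
    fix q1 q2 assume q1: "q1 \<in> X" and q2: "q2 \<in> X"
    have "inf (wayb X E x q1) (wayb X E x q2) \<le> inf (lcl X E K q1) (lcl X E K q2)"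
      using wl[OF q1] wl[OF q2] by (rule inf_mono)
    also have "\<dots> \<le> (SUP z\<in>X. inf (K z) (inf (E q1 z) (E q2 z)))"
      by (rule lcl_pair[OF F O Kd q1 q2])
    also have "\<dots> \<le> (SUP z\<in>X. inf (wayb X E x z) (inf (E q1 z) (E q2 z)))"
      by (rule SUP_mono) (use Kw in \<open>blast intro: inf_mono\<close>)
    finally show "inf (wayb X E x q1) (wayb X E x q2) \<le> (SUP z\<in>X. inf (wayb X E x z) (inf (E q1 z) (E q2 z)))" .
  qed
  have sup: "is_Lsup X E (wayb X E x) x"
  proof (rule isLsup_intro[OF F x])
    fix q y assume q: "q \<in> X" and y: "y \<in> X"
    have "inf (E x y) (wayb X E x q) \<le> inf (E q x) (E x y)"
      using wayb_le_E[OF F O x q] by (intro le_infI le_infI2 inf_le1)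
    also have "\<dots> \<le> E q y" by (rule Lorder_trans[OF O q x y])
    finally show "inf (E x y) (wayb X E x q) \<le> E q y" .
  next
    fix y assume y: "y \<in> X"
    have "Lsub X (wayb X E x) (ldown X E y) \<le> Lsub X K (ldown X E y)"
      by (rule Lsub_anti[OF F]) (rule Kw)
    also have "\<dots> = E x y" using isLsup_eq[OF KS y] by simp
    finally show "Lsub X (wayb X E x) (ldown X E y) \<le> E x y" .
  qed
  show ?thesis using dir sup by simp
qed


lemma contD:
  assumes "cont_Lordered P e"
  shows "Lorder P e" and "x \<in> P \<Longrightarrow> Ldirected P e (wayb P e x)"
    and "x \<in> P \<Longrightarrow> is_Lsup P e (wayb P e x) x"
  using assms by (auto simp: cont_Lordered_def)

definition Jint :: "'a set \<Rightarrow> ('a \<Rightarrow> 'a \<Rightarrow> 'l::complete_lattice) \<Rightarrow> 'a \<Rightarrow> 'a \<Rightarrow> 'l" where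
  "Jint P e x = (\<lambda>y. if y \<in> P then (SUP z\<in>P. inf (wayb P e x z) (wayb P e z y)) else bot)"

lemma Jint_ideal:
  assumes F: "frame TYPE('l::complete_lattice)" and C: "cont_Lordered P (e::'a \<Rightarrow> 'a \<Rightarrow> 'l)"
    and x: "x \<in> P"
  shows "Lideal P e (Jint P e x) \<and> is_Lsup P e (Jint P e x) x"
proof -
  note O = contD(1)[OF C]
  note wd = contD(2)[OF C] and ws = contD(3)[OF C]
  let ?w = "wayb P e"
  let ?J = "Jint P e x"
  have Jv: "inf (?w x z) (?w z v) \<le> ?J v" if z: "z \<in> P" and v: "v \<in> P" for z v
  proof -
    have "inf (?w x z) (?w z v) \<le> (SUP z\<in>P. inf (?w x z) (?w z v))" using z by (rule SUP_upper)
    then show ?thesis using v by (simp add: Jint_def)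
  qed
  have sub: "Lsubset P ?J" by (simp add: Lsubset_def Jint_def)
  have dir: "Ldirected P e ?J"
    unfolding Ldirected_def
  proof (intro conjI ballI)
    have "top = (SUP z\<in>P. ?w x z)" using Ldirected_top[OF wd[OF x]] by simp
    also have "\<dots> = (SUP z\<in>P. inf (?w x z) (SUP y\<in>P. ?w z y))"
      by (rule SUP_cong) (simp_all add: Ldirected_top[OF wd])
    also have "\<dots> = (SUP z\<in>P. SUP y\<in>P. inf (?w x z) (?w z y))" by (simp add: inf_SUP_fr[OF F])
    also have "\<dots> = (SUP y\<in>P. SUP z\<in>P. inf (?w x z) (?w z y))" by (rule SUP_commute)
    also have "\<dots> = (SUP y\<in>P. ?J y)" by (rule SUP_cong) (simp_all add: Jint_def)
    finally show "(SUP y\<in>P. ?J y) = top" by simp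
  next
    fix y1 y2 assume y1: "y1 \<in> P" and y2: "y2 \<in> P"
    have "inf (SUP z\<in>P. inf (?w x z) (?w z y1)) (SUP z\<in>P. inf (?w x z) (?w z y2))
          \<le> (SUP v\<in>P. inf (?J v) (inf (e y1 v) (e y2 v)))"
    proof (rule inf_SUP2_le[OF F])
      fix z1 z2 assume z1: "z1 \<in> P" and z2: "z2 \<in> P"
      have "inf (inf (?w x z1) (?w z1 y1)) (inf (?w x z2) (?w z2 y2))
            = inf (inf (?w x z1) (?w x z2)) (inf (?w z1 y1) (?w z2 y2))" by (simp add: ac_simps)
      also have "\<dots> \<le> inf (SUP z\<in>P. inf (?w x z) (inf (e z1 z) (e z2 z))) (inf (?w z1 y1) (?w z2 y2))"
        using Ldirected_pair[OF wd[OF x] z1 z2] by (rule inf_mono) simp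
      also have "\<dots> \<le> (SUP v\<in>P. inf (?J v) (inf (e y1 v) (e y2 v)))"
      proof (rule SUP_inf_le[OF F])
        fix z assume z: "z \<in> P"
        have "inf (inf (?w x z) (inf (e z1 z) (e z2 z))) (inf (?w z1 y1) (?w z2 y2))
              = inf (?w x z) (inf (inf (?w z1 y1) (e z1 z)) (inf (?w z2 y2) (e z2 z)))"
          by (simp add: ac_simps)
        also have "\<dots> \<le> inf (?w x z) (inf (?w z y1) (?w z y2))"
          using wayb_mono[OF F O z1 y1 z] wayb_mono[OF F O z2 y2 z] by (intro inf_mono order_refl)
        also have "\<dots> \<le> inf (?w x z) (SUP v\<in>P. inf (?w z v) (inf (e y1 v) (e y2 v)))"
          using Ldirected_pair[OF wd[OF z] y1 y2] by (intro inf_mono order_refl)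
        also have "\<dots> \<le> (SUP v\<in>P. inf (?J v) (inf (e y1 v) (e y2 v)))"
        proof (rule inf_SUP_le[OF F])
          fix v assume v: "v \<in> P"
          have "inf (?w x z) (inf (?w z v) (inf (e y1 v) (e y2 v)))
                = inf (inf (?w x z) (?w z v)) (inf (e y1 v) (e y2 v))" by (simp add: ac_simps)
          also have "\<dots> \<le> inf (?J v) (inf (e y1 v) (e y2 v))"
            using Jv[OF z v] by (intro inf_mono order_refl)
          also have "\<dots> \<le> (SUP v\<in>P. inf (?J v) (inf (e y1 v) (e y2 v)))" using v by (rule SUP_upper)
          finally show "inf (?w x z) (inf (?w z v) (inf (e y1 v) (e y2 v))) \<le> (SUP v\<in>P. inf (?J v) (inf (e y1 v) (e y2 v)))" .
        qed
        finally show "inf (inf (?w x z) (inf (e z1 z) (e z2 z))) (inf (?w z1 y1) (?w z2 y2)) \<le> (SUP v\<in>P. inf (?J v) (inf (e y1 v) (e y2 v)))" .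
      qed
      finally show "inf (inf (?w x z1) (?w z1 y1)) (inf (?w x z2) (?w z2 y2)) \<le> (SUP v\<in>P. inf (?J v) (inf (e y1 v) (e y2 v)))" .
    qed
    then show "inf (?J y1) (?J y2) \<le> (SUP v\<in>P. inf (?J v) (inf (e y1 v) (e y2 v)))"
      using y1 y2 by (simp add: Jint_def)
  qed
  have low: "Llower P e ?J"
    unfolding Llower_def
  proof (intro ballI)
    fix y y' assume y: "y \<in> P" and y': "y' \<in> P"
    have "inf (SUP z\<in>P. inf (?w x z) (?w z y)) (e y' y) \<le> (SUP z\<in>P. inf (?w x z) (?w z y'))"
    proof (rule SUP_inf_le[OF F])
      fix z assume z: "z \<in> P"
      have "inf (inf (?w x z) (?w z y)) (e y' y) = inf (?w x z) (inf (?w z y) (e y' y))" by (simp add: ac_simps)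
      also have "\<dots> \<le> inf (?w x z) (?w z y')" using wayb_lower[OF F z y y'] by (intro inf_mono order_refl)
      also have "\<dots> \<le> (SUP z\<in>P. inf (?w x z) (?w z y'))" using z by (rule SUP_upper)
      finally show "inf (inf (?w x z) (?w z y)) (e y' y) \<le> (SUP z\<in>P. inf (?w x z) (?w z y'))" .
    qed
    then show "inf (?J y) (e y' y) \<le> ?J y'" using y y' by (simp add: Jint_def)
  qed
  have sup: "is_Lsup P e ?J x"
  proof (rule isLsup_intro[OF F x])
    fix z y assume z: "z \<in> P" and y: "y \<in> P"
    have "inf (e x y) (SUP v\<in>P. inf (?w x v) (?w v z)) \<le> e z y"
    proof (rule inf_SUP_le[OF F])
      fix v assume v: "v \<in> P"
      have "inf (e x y) (inf (?w x v) (?w v z)) \<le> inf (e x y) (inf (e v x) (e z v))"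
        using wayb_le_E[OF F O x v] wayb_le_E[OF F O v z] by (intro inf_mono order_refl)
      also have "\<dots> = inf (inf (e z v) (e v x)) (e x y)" by (simp add: ac_simps)
      also have "\<dots> \<le> inf (e z x) (e x y)" using Lorder_trans[OF O z v x] by (rule inf_mono) simp
      also have "\<dots> \<le> e z y" by (rule Lorder_trans[OF O z x y])
      finally show "inf (e x y) (inf (?w x v) (?w v z)) \<le> e z y" .
    qed
    then show "inf (e x y) (?J z) \<le> e z y" using z by (simp add: Jint_def)
  next
    fix y assume y: "y \<in> P"
    let ?T = "Lsub P ?J (ldown P e y)"
    have "?T \<le> Lsub P (?w x) (ldown P e y)"
      unfolding Lsub_ge[OF F]
    proof
      fix z assume z: "z \<in> P"
      have "inf ?T (?w x z) \<le> Lsub P (?w z) (ldown P e y)"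
        unfolding Lsub_ge[OF F]
      proof
        fix v assume v: "v \<in> P"
        have "inf (inf ?T (?w x z)) (?w z v) = inf ?T (inf (?w x z) (?w z v))" by (simp add: ac_simps)
        also have "\<dots> \<le> inf ?T (?J v)" using Jv[OF z v] by (intro inf_mono order_refl)
        also have "\<dots> \<le> ldown P e y v" by (rule Lsub_app[OF F v])
        finally show "inf (inf ?T (?w x z)) (?w z v) \<le> ldown P e y v" .
      qed
      also have "\<dots> = e z y" using isLsup_eq[OF ws[OF z] y] by simp
      finally show "inf ?T (?w x z) \<le> ldown P e y z" using z by (simp add: ldown_def)
    qed
    also have "\<dots> = e x y" using isLsup_eq[OF ws[OF x] y] by simp
    finally show "?T \<le> e x y" .
  qed
  show ?thesis using sub dir low sup by (simp add: Lideal_def)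
qed

lemma interp:
  assumes F: "frame TYPE('l::complete_lattice)" and C: "cont_Lordered P (e::'a \<Rightarrow> 'a \<Rightarrow> 'l)"
    and x: "x \<in> P" and y: "y \<in> P"
  shows "wayb P e x y \<le> (SUP z\<in>P. inf (wayb P e x z) (wayb P e z y))"
proof -
  have I: "Lideal P e (Jint P e x)" and S: "is_Lsup P e (Jint P e x) x"
    using Jint_ideal[OF F C x] by auto
  have "inf (wayb P e x y) (e x x) \<le> Jint P e x y" by (rule wayb_le_ideal[OF F I S y])
  then show ?thesis using Lorder_refl[OF contD(1)[OF C] x] y by (simp add: Jint_def)
qed

section \<open>Scott opens\<close>

lemma scottD:
  assumes "A \<in> scott X E"
  shows "Lsubset X A" and "Lupper X E A"
    and "Lsubset X D \<Longrightarrow> Ldirected X E D \<Longrightarrow> is_Lsup X E D s \<Longrightarrow> A s = (SUP x\<in>X. inf (A x) (D x))"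
  using assms by (auto simp: scott_def)

lemma scottI:
  assumes "Lsubset X A" and "Lupper X E A"
    and "\<And>D s. Lsubset X D \<Longrightarrow> Ldirected X E D \<Longrightarrow> is_Lsup X E D s \<Longrightarrow> A s = (SUP x\<in>X. inf (A x) (D x))"
  shows "A \<in> scott X E"
  using assms by (auto simp: scott_def)

lemma scott_bot: "A \<in> scott X E \<Longrightarrow> x \<notin> X \<Longrightarrow> A x = bot"
  using scottD(1) by (auto simp: Lsubset_def)

lemma scott_upper:
  assumes "A \<in> scott X E" and "x \<in> X" and "y \<in> X"
  shows "inf (A x) (E x y) \<le> A y"
proof -
  have "\<forall>x\<in>X. \<forall>y\<in>X. inf (A x) (E x y) \<le> A y" using scottD(2)[OF assms(1)] by (simp add: Lupper_def)
  then show ?thesis using assms(2,3) by simp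
qed

lemma scott_cont_eq:
  assumes C: "cont_Lordered P e" and A: "A \<in> scott P e" and x: "x \<in> P"
  shows "A x = (SUP y\<in>P. inf (A y) (wayb P e x y))"
  by (rule scottD(3)[OF A wayb_Lsubset contD(2)[OF C x] contD(3)[OF C x]])

lemma lconst_scott:
  assumes F: "frame TYPE('l::complete_lattice)"
  shows "lconst X (c::'l) \<in> scott X E"
proof (rule scottI)
  show "Lsubset X (lconst X c)" by (simp add: Lsubset_def lconst_def)
  show "Lupper X E (lconst X c)" by (simp add: Lupper_def lconst_def le_infI1)
  fix D s assume D: "Lsubset X D" "Ldirected X E D" "is_Lsup X E D s"
  have s: "s \<in> X" using D(3) by (rule isLsup_in)
  have "(SUP x\<in>X. inf (lconst X c x) (D x)) = (SUP x\<in>X. inf c (D x))"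
    by (rule SUP_cong) (simp_all add: lconst_def)
  also have "\<dots> = inf c (SUP x\<in>X. D x)" by (simp add: inf_SUP_fr[OF F])
  also have "\<dots> = c" using Ldirected_top[OF D(2)] by simp
  finally show "lconst X c s = (SUP x\<in>X. inf (lconst X c x) (D x))" using s by (simp add: lconst_def)
qed

lemma scott_inf:
  assumes F: "frame TYPE('l::complete_lattice)"
    and A: "A \<in> scott X (E::'a \<Rightarrow> 'a \<Rightarrow> 'l)" and B: "B \<in> scott X E"
  shows "inf A B \<in> scott X E"
proof (rule scottI)
  show "Lsubset X (inf A B)" using scottD(1)[OF A] scottD(1)[OF B] by (simp add: Lsubset_def)
  show "Lupper X E (inf A B)" unfolding Lupper_def
  proof (intro ballI)
    fix x y assume x: "x \<in> X" and y: "y \<in> X"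
    have "inf (inf (A x) (B x)) (E x y) \<le> inf (inf (A x) (E x y)) (inf (B x) (E x y))"
      by (simp add: le_infI1 le_infI2)
    also have "\<dots> \<le> inf (A y) (B y)" using scott_upper[OF A x y] scott_upper[OF B x y] by (rule inf_mono)
    finally show "inf ((inf A B) x) (E x y) \<le> (inf A B) y" by simp
  qed
  fix D s assume D: "Lsubset X D" "Ldirected X E D" "is_Lsup X E D s"
  have As: "A s = (SUP x\<in>X. inf (A x) (D x))" by (rule scottD(3)[OF A D])
  have Bs: "B s = (SUP x\<in>X. inf (B x) (D x))" by (rule scottD(3)[OF B D])
  show "(inf A B) s = (SUP x\<in>X. inf ((inf A B) x) (D x))"
  proof (rule antisym)
    have "inf (SUP x\<in>X. inf (A x) (D x)) (SUP x\<in>X. inf (B x) (D x)) \<le> (SUP z\<in>X. inf (inf (A z) (B z)) (D z))"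
    proof (rule inf_SUP2_le[OF F])
      fix x y assume x: "x \<in> X" and y: "y \<in> X"
      have "inf (inf (A x) (D x)) (inf (B y) (D y)) = inf (inf (A x) (B y)) (inf (D x) (D y))"
        by (simp add: ac_simps)
      also have "\<dots> \<le> inf (inf (A x) (B y)) (SUP z\<in>X. inf (D z) (inf (E x z) (E y z)))"
        using Ldirected_pair[OF D(2) x y] by (intro inf_mono order_refl)
      also have "\<dots> \<le> (SUP z\<in>X. inf (inf (A z) (B z)) (D z))"
      proof (rule inf_SUP_le[OF F])
        fix z assume z: "z \<in> X"
        have "inf (inf (A x) (B y)) (inf (D z) (inf (E x z) (E y z)))
              = inf (inf (inf (A x) (E x z)) (inf (B y) (E y z))) (D z)" by (simp add: ac_simps)
        also have "\<dots> \<le> inf (inf (A z) (B z)) (D z)"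
          using scott_upper[OF A x z] scott_upper[OF B y z] by (intro inf_mono order_refl)
        also have "\<dots> \<le> (SUP z\<in>X. inf (inf (A z) (B z)) (D z))" using z by (rule SUP_upper)
        finally show "inf (inf (A x) (B y)) (inf (D z) (inf (E x z) (E y z))) \<le> (SUP z\<in>X. inf (inf (A z) (B z)) (D z))" .
      qed
      finally show "inf (inf (A x) (D x)) (inf (B y) (D y)) \<le> (SUP z\<in>X. inf (inf (A z) (B z)) (D z))" .
    qed
    then show "(inf A B) s \<le> (SUP x\<in>X. inf ((inf A B) x) (D x))" using As Bs by simp
  next
    show "(SUP x\<in>X. inf ((inf A B) x) (D x)) \<le> (inf A B) s"
    proof (rule SUP_least)
      fix x assume x: "x \<in> X"
      have a: "inf (A x) (D x) \<le> A s" unfolding As using x by (rule SUP_upper)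
      have b: "inf (B x) (D x) \<le> B s" unfolding Bs using x by (rule SUP_upper)
      have "inf ((inf A B) x) (D x) \<le> inf (inf (A x) (D x)) (inf (B x) (D x))"
        by (simp add: le_infI1 le_infI2)
      also have "\<dots> \<le> inf (A s) (B s)" using a b by (rule inf_mono)
      finally show "inf ((inf A B) x) (D x) \<le> (inf A B) s" by simp
    qed
  qed
qed

lemma scott_Sup:
  assumes F: "frame TYPE('l::complete_lattice)"
    and AA: "\<A> \<subseteq> scott X (E::'a \<Rightarrow> 'a \<Rightarrow> 'l)"
  shows "Sup \<A> \<in> scott X E"
proof (rule scottI)
  show "Lsubset X (Sup \<A>)" unfolding Lsubset_def
  proof (intro allI impI)
    fix x assume x: "x \<notin> X"
    have "A x = bot" if "A \<in> \<A>" for A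
    proof -
      have "A \<in> scott X E" using AA that by (rule subsetD)
      then show ?thesis using x by (rule scott_bot)
    qed
    then show "(Sup \<A>) x = bot" by simp
  qed
  show "Lupper X E (Sup \<A>)" unfolding Lupper_def
  proof (intro ballI)
    fix x y assume x: "x \<in> X" and y: "y \<in> X"
    have "inf (SUP A\<in>\<A>. A x) (E x y) \<le> (SUP A\<in>\<A>. A y)"
    proof (rule SUP_inf_le[OF F])
      fix A assume "A \<in> \<A>"
      then have "A \<in> scott X E" using AA by (rule subsetD[rotated])
      then have "inf (A x) (E x y) \<le> A y" using x y by (rule scott_upper)
      also have "\<dots> \<le> (SUP A\<in>\<A>. A y)" using \<open>A \<in> \<A>\<close> by (rule SUP_upper)
      finally show "inf (A x) (E x y) \<le> (SUP A\<in>\<A>. A y)" .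
    qed
    then show "inf ((Sup \<A>) x) (E x y) \<le> (Sup \<A>) y" by simp
  qed
  fix D s assume D: "Lsubset X D" "Ldirected X E D" "is_Lsup X E D s"
  have "(SUP A\<in>\<A>. A s) = (SUP A\<in>\<A>. SUP x\<in>X. inf (A x) (D x))"
  proof (rule SUP_cong)
    fix A assume "A \<in> \<A>"
    then have "A \<in> scott X E" using AA by (rule subsetD[rotated])
    then show "A s = (SUP x\<in>X. inf (A x) (D x))" by (rule scottD(3)[OF _ D])
  qed simp
  also have "\<dots> = (SUP x\<in>X. SUP A\<in>\<A>. inf (A x) (D x))" by (rule SUP_commute)
  also have "\<dots> = (SUP x\<in>X. inf (SUP A\<in>\<A>. A x) (D x))" by (simp add: SUP_inf_fr[OF F])
  finally show "(Sup \<A>) s = (SUP x\<in>X. inf ((Sup \<A>) x) (D x))" by simp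
qed

definition up :: "'a set \<Rightarrow> ('a \<Rightarrow> 'a \<Rightarrow> 'l::complete_lattice) \<Rightarrow> 'a \<Rightarrow> 'a \<Rightarrow> 'l" where
  "up P e y = (\<lambda>x. if x \<in> P then wayb P e x y else bot)"

lemma up_scott:
  assumes F: "frame TYPE('l::complete_lattice)" and C: "cont_Lordered P (e::'a \<Rightarrow> 'a \<Rightarrow> 'l)"
    and y: "y \<in> P"
  shows "up P e y \<in> scott P e"
proof (rule scottI)
  note O = contD(1)[OF C]
  let ?w = "wayb P e"
  show "Lsubset P (up P e y)" by (simp add: Lsubset_def up_def)
  show "Lupper P e (up P e y)" unfolding Lupper_def
    using wayb_mono[OF F O _ y] by (simp add: up_def)
  fix D s assume D: "Lsubset P D" "Ldirected P e D" "is_Lsup P e D s"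
  have s: "s \<in> P" using D(3) by (rule isLsup_in)
  have LI: "Lideal P e (lcl P e D)" and LS: "is_Lsup P e (lcl P e D) s"
    using lcl_ideal[OF F O D(2) D(3)] by auto
  have "?w s y \<le> (SUP x\<in>P. inf (?w x y) (D x))"
  proof -
    have "?w s y \<le> (SUP z\<in>P. inf (?w s z) (?w z y))" by (rule interp[OF F C s y])
    also have "\<dots> \<le> (SUP x\<in>P. inf (?w x y) (D x))"
    proof (rule SUP_least)
      fix z assume z: "z \<in> P"
      have "?w s z \<le> lcl P e D z"
        using wayb_le_ideal[OF F LI LS z, of s] Lorder_refl[OF O s] by simp
      then have "?w s z \<le> (SUP x\<in>P. inf (D x) (e z x))" using z by (simp add: lcl_def)
      then have "inf (?w s z) (?w z y) \<le> inf (SUP x\<in>P. inf (D x) (e z x)) (?w z y)"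
        by (rule inf_mono) simp
      also have "\<dots> \<le> (SUP x\<in>P. inf (?w x y) (D x))"
      proof (rule SUP_inf_le[OF F])
        fix x assume x: "x \<in> P"
        have "inf (inf (D x) (e z x)) (?w z y) = inf (inf (?w z y) (e z x)) (D x)" by (simp add: ac_simps)
        also have "\<dots> \<le> inf (?w x y) (D x)" using wayb_mono[OF F O z y x] by (intro inf_mono order_refl)
        also have "\<dots> \<le> (SUP x\<in>P. inf (?w x y) (D x))" using x by (rule SUP_upper)
        finally show "inf (inf (D x) (e z x)) (?w z y) \<le> (SUP x\<in>P. inf (?w x y) (D x))" .
      qed
      finally show "inf (?w s z) (?w z y) \<le> (SUP x\<in>P. inf (?w x y) (D x))" .
    qed
    finally show ?thesis .
  qed
  moreover have "(SUP x\<in>P. inf (?w x y) (D x)) \<le> ?w s y"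
  proof (rule SUP_least)
    fix x assume x: "x \<in> P"
    have "inf (?w x y) (D x) \<le> inf (?w x y) (e x s)" using isLsup_upper[OF F O D(3) x] by (intro inf_mono order_refl)
    also have "\<dots> \<le> ?w s y" by (rule wayb_mono[OF F O x y s])
    finally show "inf (?w x y) (D x) \<le> ?w s y" .
  qed
  ultimately have "?w s y = (SUP x\<in>P. inf (?w x y) (D x))" by (rule antisym)
  also have "\<dots> = (SUP x\<in>P. inf (up P e y x) (D x))" by (rule SUP_cong) (simp_all add: up_def)
  finally show "up P e y s = (SUP x\<in>P. inf (up P e y x) (D x))" using s by (simp add: up_def)
qed

lemma scott_decomp:
  assumes F: "frame TYPE('l::complete_lattice)" and C: "cont_Lordered P (e::'a \<Rightarrow> 'a \<Rightarrow> 'l)"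
    and A: "A \<in> scott P e"
  shows "A = Sup ((\<lambda>y. inf (lconst P (A y)) (up P e y)) ` P)"
proof
  fix x
  show "A x = Sup ((\<lambda>y. inf (lconst P (A y)) (up P e y)) ` P) x"
  proof (cases "x \<in> P")
    case True
    have "A x = (SUP y\<in>P. inf (A y) (wayb P e x y))" by (rule scott_cont_eq[OF C A True])
    also have "\<dots> = (SUP y\<in>P. inf (lconst P (A y)) (up P e y) x)"
      by (rule SUP_cong) (simp_all add: lconst_def up_def True)
    finally show ?thesis by (simp add: image_image)
  next
    case False
    then show ?thesis using scott_bot[OF A False] by (simp add: image_image lconst_def up_def)
  qed
qed

lemma decomp_scott:
  assumes F: "frame TYPE('l::complete_lattice)" and C: "cont_Lordered P (e::'a \<Rightarrow> 'a \<Rightarrow> 'l)"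
  shows "(\<lambda>y. inf (lconst P (g y)) (up P e y)) ` P \<subseteq> scott P e"
proof
  fix B assume "B \<in> (\<lambda>y. inf (lconst P (g y)) (up P e y)) ` P"
  then obtain y where y: "y \<in> P" and B: "B = inf (lconst P (g y)) (up P e y)" by (rule imageE)
  show "B \<in> scott P e" unfolding B by (rule scott_inf[OF F lconst_scott[OF F] up_scott[OF F C y]])
qed


section \<open>Points\<close>

lemma ptsD:
  assumes "p \<in> pts P e"
  shows "A \<notin> scott P e \<Longrightarrow> p A = bot"
    and "A \<in> scott P e \<Longrightarrow> B \<in> scott P e \<Longrightarrow> p (inf A B) = inf (p A) (p B)"
    and "\<A> \<subseteq> scott P e \<Longrightarrow> p (Sup \<A>) = (SUP A\<in>\<A>. p A)"
    and "p (lconst P c) = c"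
  using assms by (simp_all add: pts_def)

lemma ptsI:
  assumes "\<And>A. A \<notin> scott P e \<Longrightarrow> p A = bot"
    and "\<And>A B. A \<in> scott P e \<Longrightarrow> B \<in> scott P e \<Longrightarrow> p (inf A B) = inf (p A) (p B)"
    and "\<And>\<A>. \<A> \<subseteq> scott P e \<Longrightarrow> p (Sup \<A>) = (SUP A\<in>\<A>. p A)"
    and "\<And>c. p (lconst P c) = c"
  shows "p \<in> pts P e"
  using assms by (simp add: pts_def)

lemma pt_le_ge:
  assumes F: "frame TYPE('l::complete_lattice)"
  shows "((c::'l) \<le> pt_order P e p q) \<longleftrightarrow> (\<forall>A\<in>scott P e. inf c (p A) \<le> q A)"
  unfolding pt_order_def by (rule Lsub_ge[OF F])

lemma pt_le_app:
  assumes F: "frame TYPE('l::complete_lattice)" and A: "A \<in> scott P e"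
  shows "inf (pt_order P e p q) (p A) \<le> (q A::'l)"
  unfolding pt_order_def by (rule Lsub_app[OF F A])

lemma pt_Lorder:
  assumes F: "frame TYPE('l::complete_lattice)"
  shows "Lorder (pts P (e::'a \<Rightarrow> 'a \<Rightarrow> 'l)) (pt_order P e)"
  unfolding Lorder_def
proof (intro conjI ballI impI)
  fix p assume "p \<in> pts P e"
  have "top \<le> pt_order P e p p" unfolding pt_le_ge[OF F] by simp
  then show "pt_order P e p p = top" by (simp add: top_unique)
next
  fix p q r assume "p \<in> pts P e" "q \<in> pts P e" "r \<in> pts P e"
  show "inf (pt_order P e p q) (pt_order P e q r) \<le> pt_order P e p r"
    unfolding pt_le_ge[OF F]
  proof
    fix A assume A: "A \<in> scott P e"
    have "inf (inf (pt_order P e p q) (pt_order P e q r)) (p A) = inf (pt_order P e q r) (inf (pt_order P e p q) (p A))"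
      by (simp add: ac_simps)
    also have "\<dots> \<le> inf (pt_order P e q r) (q A)" using pt_le_app[OF F A] by (intro inf_mono order_refl)
    also have "\<dots> \<le> r A" by (rule pt_le_app[OF F A])
    finally show "inf (inf (pt_order P e p q) (pt_order P e q r)) (p A) \<le> r A" .
  qed
next
  fix p q assume p: "p \<in> pts P e" and q: "q \<in> pts P e"
    and eq: "inf (pt_order P e p q) (pt_order P e q p) = top"
  have pq: "pt_order P e p q = top" and qp: "pt_order P e q p = top" using eq by (simp_all add: inf_eq_top_iff)
  show "p = q"
  proof
    fix A show "p A = q A"
    proof (cases "A \<in> scott P e")
      case True
      have "p A \<le> q A" using pt_le_app[OF F True, of p q] pq by simp
      moreover have "q A \<le> p A" using pt_le_app[OF F True, of q p] qp by simp
      ultimately show ?thesis by (rule antisym)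
    next
      case False
      then show ?thesis using ptsD(1)[OF p] ptsD(1)[OF q] by simp
    qed
  qed
qed

definition eta :: "'a set \<Rightarrow> ('a \<Rightarrow> 'a \<Rightarrow> 'l::complete_lattice) \<Rightarrow> 'a \<Rightarrow> ('a \<Rightarrow> 'l) \<Rightarrow> 'l" where
  "eta P e x = (\<lambda>B. if B \<in> scott P e then B x else bot)"

lemma eta_pts:
  assumes F: "frame TYPE('l::complete_lattice)" and x: "x \<in> P"
  shows "eta P (e::'a \<Rightarrow> 'a \<Rightarrow> 'l) x \<in> pts P e"
proof (rule ptsI)
  fix A assume "A \<notin> scott P e" then show "eta P e x A = bot" by (simp add: eta_def)
next
  fix A B assume A: "A \<in> scott P e" and B: "B \<in> scott P e"
  have "inf A B \<in> scott P e" by (rule scott_inf[OF F A B])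
  then show "eta P e x (inf A B) = inf (eta P e x A) (eta P e x B)" using A B by (simp add: eta_def)
next
  fix AA assume AA: "AA \<subseteq> scott P e"
  have "Sup AA \<in> scott P e" by (rule scott_Sup[OF F AA])
  then have "eta P e x (Sup AA) = (SUP A\<in>AA. A x)" by (simp add: eta_def)
  also have "\<dots> = (SUP A\<in>AA. eta P e x A)"
  proof (rule SUP_cong)
    fix A assume "A \<in> AA" then have "A \<in> scott P e" using AA by (rule subsetD[rotated])
    then show "A x = eta P e x A" by (simp add: eta_def)
  qed simp
  finally show "eta P e x (Sup AA) = (SUP A\<in>AA. eta P e x A)" .
next
  fix c
  show "eta P e x (lconst P c) = c" using lconst_scott[OF F, of P c e] x by (simp add: eta_def lconst_def)
qed

lemma eta_le:
  assumes F: "frame TYPE('l::complete_lattice)" and x: "x \<in> P" and y: "y \<in> P"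
  shows "e x y \<le> pt_order P (e::'a \<Rightarrow> 'a \<Rightarrow> 'l) (eta P e x) (eta P e y)"
  unfolding pt_le_ge[OF F]
proof
  fix A assume A: "A \<in> scott P e"
  have "inf (e x y) (A x) \<le> A y" using scott_upper[OF A x y] by (simp add: inf_commute)
  then show "inf (e x y) (eta P e x A) \<le> eta P e y A" using A by (simp add: eta_def)
qed

definition ptsup :: "'a set \<Rightarrow> ('a \<Rightarrow> 'a \<Rightarrow> 'l::complete_lattice) \<Rightarrow> ((('a \<Rightarrow> 'l) \<Rightarrow> 'l) \<Rightarrow> 'l)
    \<Rightarrow> ('a \<Rightarrow> 'l) \<Rightarrow> 'l" where
  "ptsup P e D = (\<lambda>B. if B \<in> scott P e then (SUP q\<in>pts P e. inf (D q) (q B)) else bot)"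

lemma ptsup_pts:
  assumes F: "frame TYPE('l::complete_lattice)"
    and Dd: "Ldirected (pts P (e::'a \<Rightarrow> 'a \<Rightarrow> 'l)) (pt_order P e) D"
  shows "ptsup P e D \<in> pts P e"
proof (rule ptsI)
  fix A assume "A \<notin> scott P e" then show "ptsup P e D A = bot" by (simp add: ptsup_def)
next
  fix A B assume A: "A \<in> scott P e" and B: "B \<in> scott P e"
  have AB: "inf A B \<in> scott P e" by (rule scott_inf[OF F A B])
  have "(SUP q\<in>pts P e. inf (D q) (q (inf A B))) = (SUP q\<in>pts P e. inf (D q) (inf (q A) (q B)))"
    by (rule SUP_cong) (simp_all add: ptsD(2) A B)
  also have "\<dots> = inf (SUP q\<in>pts P e. inf (D q) (q A)) (SUP q\<in>pts P e. inf (D q) (q B))"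
  proof (rule antisym)
    show "(SUP q\<in>pts P e. inf (D q) (inf (q A) (q B))) \<le> inf (SUP q\<in>pts P e. inf (D q) (q A)) (SUP q\<in>pts P e. inf (D q) (q B))"
    proof (rule SUP_least)
      fix q assume q: "q \<in> pts P e"
      have a: "inf (D q) (q A) \<le> (SUP q\<in>pts P e. inf (D q) (q A))" using q by (rule SUP_upper)
      have b: "inf (D q) (q B) \<le> (SUP q\<in>pts P e. inf (D q) (q B))" using q by (rule SUP_upper)
      have "inf (D q) (inf (q A) (q B)) \<le> inf (inf (D q) (q A)) (inf (D q) (q B))"
        by (simp add: le_infI1 le_infI2)
      also have "\<dots> \<le> inf (SUP q\<in>pts P e. inf (D q) (q A)) (SUP q\<in>pts P e. inf (D q) (q B))"
        using a b by (rule inf_mono)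
      finally show "inf (D q) (inf (q A) (q B)) \<le> inf (SUP q\<in>pts P e. inf (D q) (q A)) (SUP q\<in>pts P e. inf (D q) (q B))" .
    qed
  next
    show "inf (SUP q\<in>pts P e. inf (D q) (q A)) (SUP q\<in>pts P e. inf (D q) (q B)) \<le> (SUP q\<in>pts P e. inf (D q) (inf (q A) (q B)))"
    proof (rule inf_SUP2_le[OF F])
      fix q r assume q: "q \<in> pts P e" and r: "r \<in> pts P e"
      have "inf (inf (D q) (q A)) (inf (D r) (r B)) = inf (inf (D q) (D r)) (inf (q A) (r B))"
        by (simp add: ac_simps)
      also have "\<dots> \<le> inf (SUP t\<in>pts P e. inf (D t) (inf (pt_order P e q t) (pt_order P e r t))) (inf (q A) (r B))"
        using Ldirected_pair[OF Dd q r] by (rule inf_mono) simp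
      also have "\<dots> \<le> (SUP q\<in>pts P e. inf (D q) (inf (q A) (q B)))"
      proof (rule SUP_inf_le[OF F])
        fix t assume t: "t \<in> pts P e"
        have "inf (inf (D t) (inf (pt_order P e q t) (pt_order P e r t))) (inf (q A) (r B))
          = inf (D t) (inf (inf (pt_order P e q t) (q A)) (inf (pt_order P e r t) (r B)))"
          by (simp add: ac_simps)
        also have "\<dots> \<le> inf (D t) (inf (t A) (t B))"
          using pt_le_app[OF F A, of q t] pt_le_app[OF F B, of r t] by (intro inf_mono order_refl)
        also have "\<dots> \<le> (SUP q\<in>pts P e. inf (D q) (inf (q A) (q B)))" using t by (rule SUP_upper)
        finally show "inf (inf (D t) (inf (pt_order P e q t) (pt_order P e r t))) (inf (q A) (r B)) \<le> (SUP q\<in>pts P e. inf (D q) (inf (q A) (q B)))" .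
      qed
      finally show "inf (inf (D q) (q A)) (inf (D r) (r B)) \<le> (SUP q\<in>pts P e. inf (D q) (inf (q A) (q B)))" .
    qed
  qed
  finally show "ptsup P e D (inf A B) = inf (ptsup P e D A) (ptsup P e D B)"
    using A B AB by (simp add: ptsup_def)
next
  fix AA assume AA: "AA \<subseteq> scott P e"
  have SA: "Sup AA \<in> scott P e" by (rule scott_Sup[OF F AA])
  have "(SUP q\<in>pts P e. inf (D q) (q (Sup AA))) = (SUP q\<in>pts P e. SUP A\<in>AA. inf (D q) (q A))"
    by (rule SUP_cong) (simp_all add: ptsD(3) AA inf_SUP_fr[OF F])
  also have "\<dots> = (SUP A\<in>AA. SUP q\<in>pts P e. inf (D q) (q A))" by (rule SUP_commute)
  also have "\<dots> = (SUP A\<in>AA. ptsup P e D A)"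
  proof (rule SUP_cong)
    fix A assume "A \<in> AA" then have "A \<in> scott P e" using AA by (rule subsetD[rotated])
    then show "(SUP q\<in>pts P e. inf (D q) (q A)) = ptsup P e D A" by (simp add: ptsup_def)
  qed simp
  finally show "ptsup P e D (Sup AA) = (SUP A\<in>AA. ptsup P e D A)" using SA by (simp add: ptsup_def)
next
  fix c
  have "(SUP q\<in>pts P e. inf (D q) (q (lconst P c))) = (SUP q\<in>pts P e. inf c (D q))"
    by (rule SUP_cong) (simp_all add: ptsD(4) inf_commute)
  also have "\<dots> = inf c (SUP q\<in>pts P e. D q)" by (simp add: inf_SUP_fr[OF F])
  also have "\<dots> = c" using Ldirected_top[OF Dd] by simp
  finally show "ptsup P e D (lconst P c) = c" using lconst_scott[OF F, of P c e] by (simp add: ptsup_def)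
qed

lemma ptsup_sup:
  assumes F: "frame TYPE('l::complete_lattice)"
    and Dd: "Ldirected (pts P (e::'a \<Rightarrow> 'a \<Rightarrow> 'l)) (pt_order P e) D"
  shows "is_Lsup (pts P e) (pt_order P e) D (ptsup P e D)"
proof (rule isLsup_intro[OF F ptsup_pts[OF F Dd]])
  fix q y assume q: "q \<in> pts P e" and y: "y \<in> pts P e"
  show "inf (pt_order P e (ptsup P e D) y) (D q) \<le> pt_order P e q y"
    unfolding pt_le_ge[OF F]
  proof
    fix A assume A: "A \<in> scott P e"
    have "inf (D q) (q A) \<le> (SUP q\<in>pts P e. inf (D q) (q A))" using q by (rule SUP_upper)
    then have "inf (D q) (q A) \<le> ptsup P e D A" using A by (simp add: ptsup_def)
    have "inf (inf (pt_order P e (ptsup P e D) y) (D q)) (q A) = inf (pt_order P e (ptsup P e D) y) (inf (D q) (q A))"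
      by (simp add: inf_assoc)
    also have "\<dots> \<le> inf (pt_order P e (ptsup P e D) y) (ptsup P e D A)"
      using \<open>inf (D q) (q A) \<le> ptsup P e D A\<close> by (intro inf_mono order_refl)
    also have "\<dots> \<le> y A" by (rule pt_le_app[OF F A])
    finally show "inf (inf (pt_order P e (ptsup P e D) y) (D q)) (q A) \<le> y A" .
  qed
next
  fix y assume y: "y \<in> pts P e"
  let ?T = "Lsub (pts P e) D (ldown (pts P e) (pt_order P e) y)"
  show "?T \<le> pt_order P e (ptsup P e D) y"
    unfolding pt_le_ge[OF F]
  proof
    fix A assume A: "A \<in> scott P e"
    have "inf ?T (SUP q\<in>pts P e. inf (D q) (q A)) \<le> y A"
    proof (rule inf_SUP_le[OF F])
      fix q assume q: "q \<in> pts P e"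
      have "inf ?T (D q) \<le> ldown (pts P e) (pt_order P e) y q" by (rule Lsub_app[OF F q])
      then have "inf ?T (D q) \<le> pt_order P e q y" using q by (simp add: ldown_def)
      have "inf ?T (inf (D q) (q A)) = inf (inf ?T (D q)) (q A)" by (simp add: inf_assoc)
      also have "\<dots> \<le> inf (pt_order P e q y) (q A)"
        using \<open>inf ?T (D q) \<le> pt_order P e q y\<close> by (intro inf_mono order_refl)
      also have "\<dots> \<le> y A" by (rule pt_le_app[OF F A])
      finally show "inf ?T (inf (D q) (q A)) \<le> y A" .
    qed
    then show "inf ?T (ptsup P e D A) \<le> y A" using A by (simp add: ptsup_def)
  qed
qed

lemma ptsup_unique:
  assumes F: "frame TYPE('l::complete_lattice)"
    and Dd: "Ldirected (pts P (e::'a \<Rightarrow> 'a \<Rightarrow> 'l)) (pt_order P e) D"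
    and S: "is_Lsup (pts P e) (pt_order P e) D s"
  shows "s = ptsup P e D"
  by (rule isLsup_unique[OF F pt_Lorder[OF F] S ptsup_sup[OF F Dd]])

section \<open>Push-forward\<close>

definition push :: "('a \<Rightarrow> 'b) \<Rightarrow> 'a set \<Rightarrow> ('a \<Rightarrow> 'l::complete_lattice) \<Rightarrow> 'b \<Rightarrow> 'l" where
  "push f P D = (\<lambda>q. SUP x\<in>{x\<in>P. f x = q}. D x)"

lemma push_app: "push f P D q = (SUP x\<in>{x\<in>P. f x = q}. D x)"
  by (simp add: push_def)

lemma push_sum:
  assumes F: "frame TYPE('l::complete_lattice)" and f: "f ` P \<subseteq> Y"
  shows "(SUP q\<in>Y. inf (push f P D q) (G q)) = (SUP x\<in>P. inf (D x) (G (f x)::'l))"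
proof (rule antisym)
  show "(SUP q\<in>Y. inf (push f P D q) (G q)) \<le> (SUP x\<in>P. inf (D x) (G (f x)))"
  proof (rule SUP_least)
    fix q assume q: "q \<in> Y"
    show "inf (push f P D q) (G q) \<le> (SUP x\<in>P. inf (D x) (G (f x)))"
      unfolding push_def
    proof (rule SUP_inf_le[OF F])
      fix x assume "x \<in> {x \<in> P. f x = q}"
      then have x: "x \<in> P" and fx: "f x = q" by auto
      have "inf (D x) (G (f x)) \<le> (SUP x\<in>P. inf (D x) (G (f x)))" using x by (rule SUP_upper)
      then show "inf (D x) (G q) \<le> (SUP x\<in>P. inf (D x) (G (f x)))" using fx by simp
    qed
  qed
next
  show "(SUP x\<in>P. inf (D x) (G (f x))) \<le> (SUP q\<in>Y. inf (push f P D q) (G q))"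
  proof (rule SUP_least)
    fix x assume x: "x \<in> P"
    have fx: "f x \<in> Y" using f x by blast
    have "D x \<le> push f P D (f x)" unfolding push_def using x by (intro SUP_upper) simp
    then have "inf (D x) (G (f x)) \<le> inf (push f P D (f x)) (G (f x))" by (rule inf_mono) simp
    also have "\<dots> \<le> (SUP q\<in>Y. inf (push f P D q) (G q))" using fx by (rule SUP_upper)
    finally show "inf (D x) (G (f x)) \<le> (SUP q\<in>Y. inf (push f P D q) (G q))" .
  qed
qed

lemma push_Lsubset:
  assumes f: "f ` P \<subseteq> Y"
  shows "Lsubset Y (push f P D)"
  unfolding Lsubset_def push_def
proof (intro allI impI)
  fix q assume q: "q \<notin> Y"
  have eq: "{x \<in> P. f x = q} = {}" using f q by blast
  have "(SUP x\<in>{x \<in> P. f x = q}. D x) = (SUP x\<in>{}. D x)" by (simp only: eq)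
  then show "(SUP x\<in>{x \<in> P. f x = q}. D x) = bot" by simp
qed

lemma push_dir:
  assumes F: "frame TYPE('l::complete_lattice)" and f: "f ` P \<subseteq> Y"
    and top: "(SUP x\<in>P. D x) = (top::'l)"
    and pair: "\<And>x y. x \<in> P \<Longrightarrow> y \<in> P \<Longrightarrow> inf (D x) (D y) \<le> (SUP z\<in>P. inf (D z) (inf (E (f x) (f z)) (E (f y) (f z))))"
  shows "Ldirected Y E (push f P D)"
  unfolding Ldirected_def
proof (intro conjI ballI)
  have "(SUP q\<in>Y. inf (push f P D q) top) = (SUP x\<in>P. inf (D x) top)" by (rule push_sum[OF F f])
  then show "(SUP q\<in>Y. push f P D q) = top" using top by simp
next
  fix q1 q2 assume q1: "q1 \<in> Y" and q2: "q2 \<in> Y"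
  have "inf (push f P D q1) (push f P D q2) \<le> (SUP r\<in>Y. inf (push f P D r) (inf (E q1 r) (E q2 r)))"
    unfolding push_app[of f P D q1] push_app[of f P D q2]
  proof (rule inf_SUP2_le[OF F])
    fix x y assume "x \<in> {x \<in> P. f x = q1}" and "y \<in> {x \<in> P. f x = q2}"
    then have x: "x \<in> P" and fx: "f x = q1" and y: "y \<in> P" and fy: "f y = q2" by auto
    have "inf (D x) (D y) \<le> (SUP z\<in>P. inf (D z) (inf (E (f x) (f z)) (E (f y) (f z))))" by (rule pair[OF x y])
    also have "\<dots> = (SUP r\<in>Y. inf (push f P D r) (inf (E q1 r) (E q2 r)))"
      using push_sum[OF F f, of D "\<lambda>r. inf (E q1 r) (E q2 r)"] fx fy by simp
    finally show "inf (D x) (D y) \<le> (SUP r\<in>Y. inf (push f P D r) (inf (E q1 r) (E q2 r)))" .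
  qed
  then show "inf (push f P D q1) (push f P D q2) \<le> (SUP r\<in>Y. inf (push f P D r) (inf (E q1 r) (E q2 r)))" .
qed


lemma pt_decomp:
  assumes F: "frame TYPE('l::complete_lattice)" and C: "cont_Lordered P (e::'a \<Rightarrow> 'a \<Rightarrow> 'l)"
    and p: "p \<in> pts P e" and A: "A \<in> scott P e"
  shows "p A = (SUP y\<in>P. inf (A y) (p (up P e y)))"
proof -
  have eq: "A = Sup ((\<lambda>y. inf (lconst P (A y)) (up P e y)) ` P)" by (rule scott_decomp[OF F C A])
  have "p A = p (Sup ((\<lambda>y. inf (lconst P (A y)) (up P e y)) ` P))" using arg_cong[OF eq, of p] .
  also have "\<dots> = (SUP B\<in>(\<lambda>y. inf (lconst P (A y)) (up P e y)) ` P. p B)"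
    by (rule ptsD(3)[OF p decomp_scott[OF F C]])
  also have "\<dots> = (SUP y\<in>P. p (inf (lconst P (A y)) (up P e y)))" by (simp add: image_image)
  also have "\<dots> = (SUP y\<in>P. inf (A y) (p (up P e y)))"
  proof (rule SUP_cong)
    fix y assume y: "y \<in> P"
    show "p (inf (lconst P (A y)) (up P e y)) = inf (A y) (p (up P e y))"
      using ptsD(2)[OF p lconst_scott[OF F] up_scott[OF F C y]] ptsD(4)[OF p] by simp
  qed simp
  finally show ?thesis .
qed

lemma up_le_eta:
  assumes F: "frame TYPE('l::complete_lattice)" and C: "cont_Lordered P (e::'a \<Rightarrow> 'a \<Rightarrow> 'l)"
    and q: "q \<in> pts P e" and y: "y \<in> P"
  shows "q (up P e y) \<le> pt_order P e (eta P e y) q"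
  unfolding pt_le_ge[OF F]
proof
  fix B assume B: "B \<in> scott P e"
  have "inf (B y) (q (up P e y)) \<le> (SUP y\<in>P. inf (B y) (q (up P e y)))" using y by (rule SUP_upper)
  also have "\<dots> = q B" using pt_decomp[OF F C q B] by simp
  finally show "inf (q (up P e y)) (eta P e y B) \<le> q B" using B by (simp add: eta_def inf_commute)
qed

lemma Ip_top:
  assumes F: "frame TYPE('l::complete_lattice)" and C: "cont_Lordered P (e::'a \<Rightarrow> 'a \<Rightarrow> 'l)"
    and p: "p \<in> pts P e"
  shows "(SUP y\<in>P. p (up P e y)) = top"
proof -
  have "top = p (lconst P top)" using ptsD(4)[OF p] by simp
  also have "\<dots> = (SUP y\<in>P. inf (lconst P top y) (p (up P e y)))"
    by (rule pt_decomp[OF F C p lconst_scott[OF F]])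
  also have "\<dots> = (SUP y\<in>P. p (up P e y))" by (rule SUP_cong) (simp_all add: lconst_def)
  finally show ?thesis by simp
qed

lemma Ip_pair:
  assumes F: "frame TYPE('l::complete_lattice)" and C: "cont_Lordered P (e::'a \<Rightarrow> 'a \<Rightarrow> 'l)"
    and p: "p \<in> pts P e" and x: "x \<in> P" and y: "y \<in> P"
  shows "inf (p (up P e x)) (p (up P e y)) \<le> (SUP z\<in>P. inf (p (up P e z)) (inf (e x z) (e y z)))"
proof -
  note O = contD(1)[OF C]
  have Ux: "up P e x \<in> scott P e" by (rule up_scott[OF F C x])
  have Uy: "up P e y \<in> scott P e" by (rule up_scott[OF F C y])
  have U: "inf (up P e x) (up P e y) \<in> scott P e" by (rule scott_inf[OF F Ux Uy])
  have "inf (p (up P e x)) (p (up P e y)) = p (inf (up P e x) (up P e y))"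
    using ptsD(2)[OF p Ux Uy] by simp
  also have "\<dots> = (SUP z\<in>P. inf ((inf (up P e x) (up P e y)) z) (p (up P e z)))"
    by (rule pt_decomp[OF F C p U])
  also have "\<dots> \<le> (SUP z\<in>P. inf (p (up P e z)) (inf (e x z) (e y z)))"
  proof (rule SUP_mono)
    fix z assume z: "z \<in> P"
    have "inf ((inf (up P e x) (up P e y)) z) (p (up P e z)) = inf (p (up P e z)) (inf (wayb P e z x) (wayb P e z y))"
      using z by (simp add: up_def inf_commute)
    also have "\<dots> \<le> inf (p (up P e z)) (inf (e x z) (e y z))"
      using wayb_le_E[OF F O z x] wayb_le_E[OF F O z y] by (intro inf_mono order_refl)
    finally show "\<exists>m\<in>P. inf ((inf (up P e x) (up P e y)) z) (p (up P e z)) \<le> inf (p (up P e m)) (inf (e x m) (e y m))"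
      using z by (rule bexI)
  qed
  finally show ?thesis .
qed

lemma eta_img:
  assumes F: "frame TYPE('l::complete_lattice)"
  shows "eta P (e::'a \<Rightarrow> 'a \<Rightarrow> 'l) ` P \<subseteq> pts P e"
proof
  fix q assume "q \<in> eta P e ` P"
  then obtain x where x: "x \<in> P" and q: "q = eta P e x" by (rule imageE)
  show "q \<in> pts P e" unfolding q by (rule eta_pts[OF F x])
qed

lemma Kp_dir:
  assumes F: "frame TYPE('l::complete_lattice)" and C: "cont_Lordered P (e::'a \<Rightarrow> 'a \<Rightarrow> 'l)"
    and p: "p \<in> pts P e"
  shows "Ldirected (pts P e) (pt_order P e) (push (eta P e) P (\<lambda>y. p (up P e y)))"
proof (rule push_dir[OF F eta_img[OF F] Ip_top[OF F C p]])
  fix x y assume x: "x \<in> P" and y: "y \<in> P"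
  have "inf (p (up P e x)) (p (up P e y)) \<le> (SUP z\<in>P. inf (p (up P e z)) (inf (e x z) (e y z)))"
    by (rule Ip_pair[OF F C p x y])
  also have "\<dots> \<le> (SUP z\<in>P. inf (p (up P e z)) (inf (pt_order P e (eta P e x) (eta P e z)) (pt_order P e (eta P e y) (eta P e z))))"
  proof (rule SUP_mono)
    fix z assume z: "z \<in> P"
    have "inf (p (up P e z)) (inf (e x z) (e y z)) \<le> inf (p (up P e z)) (inf (pt_order P e (eta P e x) (eta P e z)) (pt_order P e (eta P e y) (eta P e z)))"
      using eta_le[OF F x z] eta_le[OF F y z] by (intro inf_mono order_refl)
    then show "\<exists>m\<in>P. inf (p (up P e z)) (inf (e x z) (e y z)) \<le> inf (p (up P e m)) (inf (pt_order P e (eta P e x) (eta P e m)) (pt_order P e (eta P e y) (eta P e m)))"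
      using z by (rule bexI)
  qed
  finally show "inf (p (up P e x)) (p (up P e y)) \<le> (SUP z\<in>P. inf (p (up P e z)) (inf (pt_order P e (eta P e x) (eta P e z)) (pt_order P e (eta P e y) (eta P e z))))" .
qed

lemma Kp_ptsup:
  assumes F: "frame TYPE('l::complete_lattice)" and C: "cont_Lordered P (e::'a \<Rightarrow> 'a \<Rightarrow> 'l)"
    and p: "p \<in> pts P e"
  shows "ptsup P e (push (eta P e) P (\<lambda>y. p (up P e y))) = p"
proof
  fix B show "ptsup P e (push (eta P e) P (\<lambda>y. p (up P e y))) B = p B"
  proof (cases "B \<in> scott P e")
    case True
    have "(SUP q\<in>pts P e. inf (push (eta P e) P (\<lambda>y. p (up P e y)) q) (q B))
        = (SUP y\<in>P. inf (p (up P e y)) (eta P e y B))"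
      by (rule push_sum[OF F eta_img[OF F]])
    also have "\<dots> = (SUP y\<in>P. inf (B y) (p (up P e y)))"
      by (rule SUP_cong) (simp_all add: eta_def True inf_commute)
    also have "\<dots> = p B" using pt_decomp[OF F C p True] by simp
    finally show ?thesis using True by (simp add: ptsup_def)
  next
    case False
    then show ?thesis using ptsD(1)[OF p False] by (simp add: ptsup_def)
  qed
qed

lemma Kp_sup:
  assumes F: "frame TYPE('l::complete_lattice)" and C: "cont_Lordered P (e::'a \<Rightarrow> 'a \<Rightarrow> 'l)"
    and p: "p \<in> pts P e"
  shows "is_Lsup (pts P e) (pt_order P e) (push (eta P e) P (\<lambda>y. p (up P e y))) p"
  using ptsup_sup[OF F Kp_dir[OF F C p]] Kp_ptsup[OF F C p] by simp

lemma Kp_way: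
  assumes F: "frame TYPE('l::complete_lattice)" and C: "cont_Lordered P (e::'a \<Rightarrow> 'a \<Rightarrow> 'l)"
    and p: "p \<in> pts P e" and q: "q \<in> pts P e"
  shows "push (eta P e) P (\<lambda>y. p (up P e y)) q \<le> wayb (pts P e) (pt_order P e) p q"
  unfolding push_app
proof (rule SUP_least)
  fix x assume "x \<in> {x \<in> P. eta P e x = q}"
  then have x: "x \<in> P" and qx: "q = eta P e x" by auto
  show "p (up P e x) \<le> wayb (pts P e) (pt_order P e) p q"
  proof (rule wayb_ge[OF F q])
    fix J s assume J: "Lideal (pts P e) (pt_order P e) J" and S: "is_Lsup (pts P e) (pt_order P e) J s"
    have Jd: "Ldirected (pts P e) (pt_order P e) J" using J by (simp add: Lideal_def)
    have s: "s = ptsup P e J" by (rule ptsup_unique[OF F Jd S])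
    have Ux: "up P e x \<in> scott P e" by (rule up_scott[OF F C x])
    have "inf (p (up P e x)) (pt_order P e p s) \<le> s (up P e x)"
      using pt_le_app[OF F Ux, of p s] by (simp add: inf_commute)
    also have "\<dots> = (SUP r\<in>pts P e. inf (J r) (r (up P e x)))" using s Ux by (simp add: ptsup_def)
    also have "\<dots> \<le> J q"
    proof (rule SUP_least)
      fix r assume r: "r \<in> pts P e"
      have "inf (J r) (r (up P e x)) \<le> inf (J r) (pt_order P e q r)"
        using up_le_eta[OF F C r x] qx by (intro inf_mono order_refl) simp
      also have "\<dots> \<le> J q" using J r q by (simp add: Lideal_def Llower_def)
      finally show "inf (J r) (r (up P e x)) \<le> J q" .
    qed
    finally show "inf (p (up P e x)) (pt_order P e p s) \<le> J q" .
  qed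
qed


lemma phi_scott:
  assumes F: "frame TYPE('l::complete_lattice)" and A: "A \<in> scott P (e::'a \<Rightarrow> 'a \<Rightarrow> 'l)"
  shows "phi P e A \<in> scott (pts P e) (pt_order P e)"
proof (rule scottI)
  show "Lsubset (pts P e) (phi P e A)" by (simp add: Lsubset_def phi_def)
  show "Lupper (pts P e) (pt_order P e) (phi P e A)" unfolding Lupper_def
  proof (intro ballI)
    fix p q assume p: "p \<in> pts P e" and q: "q \<in> pts P e"
    have "inf (p A) (pt_order P e p q) \<le> q A" using pt_le_app[OF F A, of p q] by (simp add: inf_commute)
    then show "inf (phi P e A p) (pt_order P e p q) \<le> phi P e A q" using p q by (simp add: phi_def)
  qed
  fix D s assume D: "Lsubset (pts P e) D" "Ldirected (pts P e) (pt_order P e) D"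
    "is_Lsup (pts P e) (pt_order P e) D s"
  have s: "s = ptsup P e D" by (rule ptsup_unique[OF F D(2) D(3)])
  have sP: "s \<in> pts P e" using D(3) by (rule isLsup_in)
  have "phi P e A s = s A" using sP by (simp add: phi_def)
  also have "\<dots> = (SUP q\<in>pts P e. inf (D q) (q A))" using s A by (simp add: ptsup_def)
  also have "\<dots> = (SUP q\<in>pts P e. inf (phi P e A q) (D q))"
    by (rule SUP_cong) (simp_all add: phi_def inf_commute)
  finally show "phi P e A s = (SUP q\<in>pts P e. inf (phi P e A q) (D q))" .
qed

lemma scott_phi:
  assumes F: "frame TYPE('l::complete_lattice)" and C: "cont_Lordered P (e::'a \<Rightarrow> 'a \<Rightarrow> 'l)"
    and U: "U \<in> scott (pts P e) (pt_order P e)"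
  shows "U \<in> phi P e ` scott P e"
proof -
  note O = contD(1)[OF C]
  define A where "A = (\<lambda>x. if x \<in> P then U (eta P e x) else bot)"
  have AS: "A \<in> scott P e"
  proof (rule scottI)
    show "Lsubset P A" by (simp add: Lsubset_def A_def)
    show "Lupper P e A" unfolding Lupper_def
    proof (intro ballI)
      fix x y assume x: "x \<in> P" and y: "y \<in> P"
      have "inf (U (eta P e x)) (e x y) \<le> inf (U (eta P e x)) (pt_order P e (eta P e x) (eta P e y))"
        using eta_le[OF F x y] by (intro inf_mono order_refl)
      also have "\<dots> \<le> U (eta P e y)" by (rule scott_upper[OF U eta_pts[OF F x] eta_pts[OF F y]])
      finally show "inf (A x) (e x y) \<le> A y" using x y by (simp add: A_def)
    qed
    fix D s assume D: "Lsubset P D" "Ldirected P e D" "is_Lsup P e D s"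
    have s: "s \<in> P" using D(3) by (rule isLsup_in)
    let ?Dp = "push (eta P e) P D"
    have Dd: "Ldirected (pts P e) (pt_order P e) ?Dp"
    proof (rule push_dir[OF F eta_img[OF F] Ldirected_top[OF D(2)]])
      fix x y assume x: "x \<in> P" and y: "y \<in> P"
      have "inf (D x) (D y) \<le> (SUP z\<in>P. inf (D z) (inf (e x z) (e y z)))" by (rule Ldirected_pair[OF D(2) x y])
      also have "\<dots> \<le> (SUP z\<in>P. inf (D z) (inf (pt_order P e (eta P e x) (eta P e z)) (pt_order P e (eta P e y) (eta P e z))))"
      proof (rule SUP_mono)
        fix z assume z: "z \<in> P"
        have "inf (D z) (inf (e x z) (e y z)) \<le> inf (D z) (inf (pt_order P e (eta P e x) (eta P e z)) (pt_order P e (eta P e y) (eta P e z)))"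
          using eta_le[OF F x z] eta_le[OF F y z] by (intro inf_mono order_refl)
        then show "\<exists>m\<in>P. inf (D z) (inf (e x z) (e y z)) \<le> inf (D m) (inf (pt_order P e (eta P e x) (eta P e m)) (pt_order P e (eta P e y) (eta P e m)))"
          using z by (rule bexI)
      qed
      finally show "inf (D x) (D y) \<le> (SUP z\<in>P. inf (D z) (inf (pt_order P e (eta P e x) (eta P e z)) (pt_order P e (eta P e y) (eta P e z))))" .
    qed
    have Dps: "ptsup P e ?Dp = eta P e s"
    proof
      fix B show "ptsup P e ?Dp B = eta P e s B"
      proof (cases "B \<in> scott P e")
        case True
        have "(SUP q\<in>pts P e. inf (?Dp q) (q B)) = (SUP x\<in>P. inf (D x) (eta P e x B))"
          by (rule push_sum[OF F eta_img[OF F]])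
        also have "\<dots> = (SUP x\<in>P. inf (B x) (D x))"
          by (rule SUP_cong) (simp_all add: eta_def True inf_commute)
        also have "\<dots> = B s" using scottD(3)[OF True D] by simp
        finally show ?thesis using True by (simp add: ptsup_def eta_def)
      next
        case False
        then show ?thesis by (simp add: ptsup_def eta_def)
      qed
    qed
    have DS: "is_Lsup (pts P e) (pt_order P e) ?Dp (eta P e s)"
      using ptsup_sup[OF F Dd] Dps by simp
    have "U (eta P e s) = (SUP q\<in>pts P e. inf (U q) (?Dp q))"
      by (rule scottD(3)[OF U push_Lsubset[OF eta_img[OF F]] Dd DS])
    also have "\<dots> = (SUP q\<in>pts P e. inf (?Dp q) (U q))" by (simp add: inf_commute)
    also have "\<dots> = (SUP x\<in>P. inf (D x) (U (eta P e x)))" by (rule push_sum[OF F eta_img[OF F]])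
    also have "\<dots> = (SUP x\<in>P. inf (A x) (D x))" by (rule SUP_cong) (simp_all add: A_def inf_commute)
    finally show "A s = (SUP x\<in>P. inf (A x) (D x))" using s by (simp add: A_def)
  qed
  have "U = phi P e A"
  proof
    fix p show "U p = phi P e A p"
    proof (cases "p \<in> pts P e")
      case True
      let ?K = "push (eta P e) P (\<lambda>y. p (up P e y))"
      have "U p = (SUP q\<in>pts P e. inf (U q) (?K q))"
        by (rule scottD(3)[OF U push_Lsubset[OF eta_img[OF F]] Kp_dir[OF F C True] Kp_sup[OF F C True]])
      also have "\<dots> = (SUP q\<in>pts P e. inf (?K q) (U q))" by (simp add: inf_commute)
      also have "\<dots> = (SUP y\<in>P. inf (p (up P e y)) (U (eta P e y)))" by (rule push_sum[OF F eta_img[OF F]])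
      also have "\<dots> = (SUP y\<in>P. inf (A y) (p (up P e y)))" by (rule SUP_cong) (simp_all add: A_def inf_commute)
      also have "\<dots> = p A" using pt_decomp[OF F C True AS] by simp
      finally show ?thesis using True by (simp add: phi_def)
    next
      case False
      then show ?thesis using scott_bot[OF U False] by (simp add: phi_def)
    qed
  qed
  then show ?thesis using AS by (rule image_eqI)
qed

theorem proposition6p3:
  fixes P :: "'a set" and e :: "'a \<Rightarrow> 'a \<Rightarrow> 'l::complete_lattice"
  assumes "frame TYPE('l)"
    and "cont_Lordered P e"
  shows "cont_Ldcpo (pts P e) (pt_order P e)
         \<and> scott (pts P e) (pt_order P e) = spectral P e"
proof -
  note F = assms(1) and C = assms(2)
  note O = pt_Lorder[OF F, of P e]
  have cont: "cont_Lordered (pts P e) (pt_order P e)"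
    unfolding cont_Lordered_def
  proof (intro conjI ballI O)
    fix p assume p: "p \<in> pts P e"
    have "Ldirected (pts P e) (pt_order P e) (wayb (pts P e) (pt_order P e) p)
      \<and> is_Lsup (pts P e) (pt_order P e) (wayb (pts P e) (pt_order P e) p) p"
      by (rule cont_from_approx[OF F O p Kp_dir[OF F C p] Kp_sup[OF F C p] Kp_way[OF F C p]])
    then show "Ldirected (pts P e) (pt_order P e) (wayb (pts P e) (pt_order P e) p)"
      and "is_Lsup (pts P e) (pt_order P e) (wayb (pts P e) (pt_order P e) p) p" by auto
  qed
  have dcpo: "Ldcpo (pts P e) (pt_order P e)"
    unfolding Ldcpo_def
  proof (intro conjI allI impI O)
    fix D assume "Lsubset (pts P e) D \<and> Ldirected (pts P e) (pt_order P e) D"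
    then have Dd: "Ldirected (pts P e) (pt_order P e) D" by simp
    show "\<exists>s. is_Lsup (pts P e) (pt_order P e) D s"
    proof (rule exI)
      show "is_Lsup (pts P e) (pt_order P e) D (ptsup P e D)" by (rule ptsup_sup[OF F Dd])
    qed
  qed
  have eq: "scott (pts P e) (pt_order P e) = spectral P e"
  proof
    show "scott (pts P e) (pt_order P e) \<subseteq> spectral P e"
      unfolding spectral_def using scott_phi[OF F C] by (rule subsetI)
    show "spectral P e \<subseteq> scott (pts P e) (pt_order P e)"
      unfolding spectral_def
    proof
      fix U assume "U \<in> phi P e ` scott P e"
      then obtain A where A: "A \<in> scott P e" and U: "U = phi P e A" by (rule imageE)
      show "U \<in> scott (pts P e) (pt_order P e)" unfolding U by (rule phi_scott[OF F A])
    qed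
  qed
  show ?thesis using cont dcpo eq by (simp add: cont_Ldcpo_def)
qed

end
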